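(* Let $S$ be a finite set with $|S| = n \ge 3$ and let $(\mathcal{S}_1, \mathcal{S}_2)$ be an $S$-pair. Then $(\mathcal{S}_1,\mathcal{S}_2)$ is order consistent with respect to $S$ if and only if there exist sets $A_1 \in \mathcal{S}_1$ and $A_2 \in \mathcal{S}_2$ with $|A_1| = |A_2| = n-1$ and $A_1 \ne A_2$, and subsets $B_1, B_2 \subseteq S$ with $|B_1| = |B_2| = n-2$, such that for $i = 1,2$: $B_i \cap A_i = B_1 \cap B_2$, this common set is a subset of $A_1 \cap A_2$ of size $n-3$, and $\{b\} \in \mathcal{S}_i$ for every $b \in B_i$.
   Context: Let $S$ be a finite nonempty set and $\mathcal{S}_1, \mathcal{S}_2 \subseteq 2^S$. The pair $(\mathcal{S}_1,\mathcal{S}_2)$ is an $S$-pair if: (S1) for $i=1,2$, if $A,B \in \mathcal{S}_i$ with $B \subset A$ and $|A| = |B|+1$, then every $|B|$-element subset of $A$ lies in $\mathcal{S}_i$; (S2) for $i=1,2$, if $A,B \in \mathcal{S}_i$ with $|A|=|B|$ and $|A\cap B| = |A|-1$, then $A\cup B \in \mathcal{S}_i$; (S3) for $i=1,2$, not every singleton $\{s\}$, $s\in S$, lies in $\mathcal{S}_i$, and $S \notin \mathcal{S}_i$; (S4) for $k = 1,\dots,|S|-1$ and $x\in S$, if every $k$-element subset of $S - x$ lies in $\mathcal{S}_1$, then not every $(|S|-k)$-element subset of $S-x$ lies in $\mathcal{S}_2$. The pair $(\mathcal{S}_1,\mathcal{S}_2)$ is order consistent with respect to $S$ (where $|S|=n$)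 if for every ordering $s_1 s_2\cdots s_n$ of $S$ there exists $i\in\{1,\dots,n\}$ such that $\{s_1,\dots,s_i\} \in \mathcal{S}_1$ or $\{s_i,\dots,s_n\} \in \mathcal{S}_2$. *)

theory Defs
  imports Main
begin

definition S_pair :: "'a set \<Rightarrow> 'a set set \<Rightarrow> 'a set set \<Rightarrow> bool" where
  "S_pair S S1 S2 \<longleftrightarrow>
     S1 \<subseteq> Pow S \<and> S2 \<subseteq> Pow S \<and>
     (\<forall>F \<in> {S1, S2}.
        \<comment> \<open>(S1)\<close>
        (\<forall>A \<in> F. \<forall>B \<in> F. B \<subset> A \<and> card A = card B + 1 \<longrightarrow>
            (\<forall>C. C \<subseteq> A \<and> card C = card B \<longrightarrow> C \<in> F)) \<and>
        \<comment> \<open>(S2)\<close>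
        (\<forall>A \<in> F. \<forall>B \<in> F. card A = card B \<and> card (A \<inter> B) = card A - 1 \<longrightarrow>
            A \<union> B \<in> F) \<and>
        \<comment> \<open>(S3)\<close>
        (\<not> (\<forall>s \<in> S. {s} \<in> F)) \<and> S \<notin> F) \<and>
     \<comment> \<open>(S4)\<close>
     (\<forall>k x. 1 \<le> k \<and> k \<le> card S - 1 \<and> x \<in> S \<longrightarrow>
        (\<forall>C. C \<subseteq> S - {x} \<and> card C = k \<longrightarrow> C \<in> S1) \<longrightarrow>
        \<not> (\<forall>C. C \<subseteq> S - {x} \<and> card C = card S - k \<longrightarrow> C \<in> S2))"

text \<open>An ordering s_1 ... s_n of S is a distinct list xs with set xs = S.
  The prefix {s_1..s_i} is set (take i xs), the suffix {s_i..s_n} is set (drop (i-1) xs).\<close>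
definition order_consistent :: "'a set \<Rightarrow> 'a set set \<Rightarrow> 'a set set \<Rightarrow> bool" where
  "order_consistent S S1 S2 \<longleftrightarrow>
     (\<forall>xs. distinct xs \<and> set xs = S \<longrightarrow>
        (\<exists>i \<in> {1..length xs}. set (take i xs) \<in> S1 \<or> set (drop (i - 1) xs) \<in> S2))"

end

theory Submission
  imports Defs
begin

definition fam :: "'a set \<Rightarrow> 'a set set \<Rightarrow> bool" where
  "fam S F \<longleftrightarrow> F \<subseteq> Pow S \<and>
        (\<forall>A \<in> F. \<forall>B \<in> F. B \<subset> A \<and> card A = card B + 1 \<longrightarrow>
            (\<forall>C. C \<subseteq> A \<and> card C = card B \<longrightarrow> C \<in> F)) \<and>
        (\<forall>A \<in> F. \<forall>B \<in> F. card A = card B \<and> card (A \<inter> B) = card A - 1 \<longrightarrow>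
            A \<union> B \<in> F) \<and>
        (\<not> (\<forall>s \<in> S. {s} \<in> F)) \<and> S \<notin> F"

lemma S_pair_fam1: "S_pair S S1 S2 \<Longrightarrow> fam S S1"
  unfolding S_pair_def fam_def
  apply (elim conjE)
  apply (drule bspec[where x=S1], simp)
  apply (elim conjE)
  apply (intro conjI; assumption)
  done
lemma S_pair_fam2: "S_pair S S1 S2 \<Longrightarrow> fam S S2"
  unfolding S_pair_def fam_def
  apply (elim conjE)
  apply (drule bspec[where x=S2], simp)
  apply (elim conjE)
  apply (intro conjI; assumption)
  done

lemma fam_sub: "fam S F \<Longrightarrow> A \<in> F \<Longrightarrow> A \<subseteq> S"
  unfolding fam_def by auto

lemma fam_notS: "fam S F \<Longrightarrow> S \<notin> F"
  unfolding fam_def by auto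

lemma fam_notall: "fam S F \<Longrightarrow> \<exists>s\<in>S. {s} \<notin> F"
  unfolding fam_def by auto

lemma fam_S1:
  assumes "fam S F" "A \<in> F" "B \<in> F" "B \<subset> A" "card A = card B + 1" "C \<subseteq> A" "card C = card B"
  shows "C \<in> F"
proof -
  have s1: "\<forall>A \<in> F. \<forall>B \<in> F. B \<subset> A \<and> card A = card B + 1 \<longrightarrow>
            (\<forall>C. C \<subseteq> A \<and> card C = card B \<longrightarrow> C \<in> F)" using assms(1) unfolding fam_def by (elim conjE)
  have "B \<subset> A \<and> card A = card B + 1" using assms(4,5) by (rule conjI)
  moreover have "C \<subseteq> A \<and> card C = card B" using assms(6,7) by (rule conjI)
  ultimately show ?thesis using s1 assms(2,3) by (elim ballE allE impE) auto
qed

lemma fam_S2: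
  assumes "fam S F" "A \<in> F" "B \<in> F" "card A = card B" "card (A \<inter> B) = card A - 1"
  shows "A \<union> B \<in> F"
proof -
  have s2: "\<forall>A \<in> F. \<forall>B \<in> F. card A = card B \<and> card (A \<inter> B) = card A - 1 \<longrightarrow>
            A \<union> B \<in> F" using assms(1) unfolding fam_def by (elim conjE)
  have "card A = card B \<and> card (A \<inter> B) = card A - 1" using assms(4,5) by (rule conjI)
  thus ?thesis using s2 assms(2,3) by (elim ballE impE) auto
qed

lemma adj_down:
  assumes "fam S F" "finite S" "A \<in> F" "A - {a} \<in> F" "a \<in> A" "b \<in> A"
  shows "A - {b} \<in> F"
proof -
  have fA: "finite A" using fam_sub[OF assms(1,3)] assms(2) finite_subset by blast
  have 1: "A - {a} \<subset> A" using assms(5) by auto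
  have 2: "card A = card (A - {a}) + 1" using card.remove[OF fA assms(5)] by simp
  have 3: "card (A - {b}) = card (A - {a})" using fA assms(5,6) by (simp add: card_Diff_singleton)
  show ?thesis by (rule fam_S1[OF assms(1,3,4) 1 2 _ 3]) auto
qed

lemma adj_union:
  assumes "fam S F" "finite S" "insert a Q \<in> F" "insert b Q \<in> F" "a \<notin> Q" "b \<notin> Q" "a \<noteq> b"
  shows "insert a (insert b Q) \<in> F"
proof -
  have "Q \<subseteq> S" using fam_sub[OF assms(1,3)] by blast
  hence fQ: "finite Q" using assms(2) by (rule finite_subset)
  have i: "insert a Q \<inter> insert b Q = Q" using assms(5,6,7) by auto
  have c1: "card (insert a Q) = card (insert b Q)" using fQ assms(5,6) by simp
  have c2: "card (insert a Q \<inter> insert b Q) = card (insert a Q) - 1" unfolding i using fQ assms(5) by simp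
  have "insert a Q \<union> insert b Q \<in> F" by (rule fam_S2[OF assms(1,3,4) c1 c2])
  moreover have "insert a Q \<union> insert b Q = insert a (insert b Q)" by auto
  ultimately show ?thesis by simp
qed

lemma cosing_unique:
  assumes "fam S F" "finite S" "a \<in> S" "b \<in> S" "S - {a} \<in> F" "S - {b} \<in> F"
  shows "a = b"
proof (rule ccontr)
  assume ab: "a \<noteq> b"
  let ?Q = "S - {a,b}"
  have "insert b ?Q = S - {a}" "insert a ?Q = S - {b}" using assms(3,4) ab by auto
  hence "insert a (insert b ?Q) \<in> F" using adj_union[OF assms(1,2), of a ?Q b] assms(5,6) ab by auto
  moreover have "insert a (insert b ?Q) = S" using assms(3,4) by auto
  ultimately show False using fam_notS[OF assms(1)] by simp
qed

lemma union_lemma: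
  assumes "fam S F" "finite S" "finite E" "E \<noteq> {}" "E \<inter> P = {}" "\<forall>e\<in>E. insert e P \<in> F"
  shows "P \<union> E \<in> F"
  using assms(3-6)
proof (induction "card E" arbitrary: E rule: less_induct)
  case less
  show ?case
  proof (cases "card E = 1")
    case True
    then obtain e where "E = {e}" using card_1_singletonE by blast
    then show ?thesis using less.prems by auto
  next
    case False
    have c0: "card E \<noteq> 0" using less.prems by simp
    obtain e1 where e1: "e1 \<in> E" using less.prems by blast
    have c2: "card E \<ge> 2" using False c0 by arith
    have "card (E - {e1}) \<noteq> 0" using c2 e1 less.prems(1) by (simp add: card_Diff_singleton)
    then obtain e2 where e2: "e2 \<in> E - {e1}" by (metis all_not_in_conv card.empty)
    from e1 e2 have e: "e1 \<in> E" "e2 \<in> E" "e1 \<noteq> e2" by auto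
    let ?Q = "P \<union> (E - {e1,e2})"
    have h1: "P \<union> (E - {e1}) \<in> F"
    proof (rule less.hyps)
      show "card (E - {e1}) < card E" using less.prems(1) e(1) by (rule card_Diff1_less)
      show "finite (E - {e1})" using less.prems(1) by simp
      show "E - {e1} \<noteq> {}" using e by blast
      show "(E - {e1}) \<inter> P = {}" using less.prems(3) by blast
      show "\<forall>e\<in>E - {e1}. insert e P \<in> F" using less.prems(4) by blast
    qed
    have h2: "P \<union> (E - {e2}) \<in> F"
    proof (rule less.hyps)
      show "card (E - {e2}) < card E" using less.prems(1) e(2) by (rule card_Diff1_less)
      show "finite (E - {e2})" using less.prems(1) by simp
      show "E - {e2} \<noteq> {}" using e by blast
      show "(E - {e2}) \<inter> P = {}" using less.prems(3) by blast
      show "\<forall>e\<in>E - {e2}. insert e P \<in> F" using less.prems(4) by blast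
    qed
    have q1: "insert e2 ?Q = P \<union> (E - {e1})" "insert e1 ?Q = P \<union> (E - {e2})" using e by auto
    have q2: "e1 \<notin> ?Q" "e2 \<notin> ?Q" using e less.prems(3) by auto
    have i1: "insert e1 ?Q \<in> F" "insert e2 ?Q \<in> F" using h1 h2 q1 by simp_all
    have "insert e1 (insert e2 ?Q) \<in> F"
      by (rule adj_union[OF assms(1,2) i1 q2 e(3)])
    moreover have "insert e1 (insert e2 ?Q) = P \<union> E" using e by auto
    ultimately show ?thesis by simp
  qed
qed

definition Gs :: "'a set \<Rightarrow> 'a set set \<Rightarrow> 'a set set \<Rightarrow> 'a set \<Rightarrow> bool" where
  "Gs S F1 F2 P \<longleftrightarrow> P \<notin> F1 \<and> S - P \<notin> F2"

definition upchain :: "'a set \<Rightarrow> 'a set set \<Rightarrow> 'a set set \<Rightarrow> 'a set \<Rightarrow> 'a list \<Rightarrow> bool" where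
  "upchain S F1 F2 P ys \<longleftrightarrow> distinct ys \<and> set ys = S - P \<and>
     (\<forall>j<length ys. Gs S F1 F2 (P \<union> set (take j ys)))"

lemma up_step:
  assumes f1: "fam S F1" and f2: "fam S F2" and fin: "finite S" and PS: "P \<subseteq> S"
    and G: "Gs S F1 F2 P" and U: "\<forall>h\<in>S-P. S - {h} \<notin> F1" and c: "card (S - P) \<ge> 2"
  shows "\<exists>e\<in>S-P. Gs S F1 F2 (insert e P)"
proof (rule ccontr)
  assume "\<not> ?thesis"
  hence nG: "\<forall>e\<in>S-P. insert e P \<in> F1 \<or> S - insert e P \<in> F2" unfolding Gs_def by blast
  have uniq: "e1 = e2" if "e1 \<in> S - P" "e2 \<in> S - P" "S - insert e1 P \<in> F2" "S - insert e2 P \<in> F2" for e1 e2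
  proof (rule ccontr)
    assume ne: "e1 \<noteq> e2"
    let ?Q = "S - P - {e1,e2}"
    have "insert e2 ?Q = S - insert e1 P" "insert e1 ?Q = S - insert e2 P" using that ne by auto
    hence i: "insert e1 ?Q \<in> F2" "insert e2 ?Q \<in> F2" using that by simp_all
    have "insert e1 (insert e2 ?Q) \<in> F2" by (rule adj_union[OF f2 fin i]) (use ne in auto)
    moreover have "insert e1 (insert e2 ?Q) = S - P" using that by auto
    ultimately show False using G unfolding Gs_def by simp
  qed
  have fSP: "finite (S - P)" using fin by simp
  have ne: "S - P \<noteq> {}"
  proof
    assume "S - P = {}" hence "card (S - P) = 0" by (metis card.empty)
    thus False using c by simp
  qed
  show False
  proof (cases "\<forall>e\<in>S-P. insert e P \<in> F1")
    case True
    have "P \<union> (S - P) \<in> F1" by (rule union_lemma[OF f1 fin fSP ne _ True]) auto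
    moreover have "P \<union> (S - P) = S" using PS by auto
    ultimately show False using fam_notS[OF f1] by simp
  next
    case False
    then obtain h where h: "h \<in> S - P" "insert h P \<notin> F1" by blast
    hence hF2: "S - insert h P \<in> F2" using nG by blast
    let ?E = "S - P - {h}"
    have allE: "\<forall>e\<in>?E. insert e P \<in> F1"
    proof
      fix e assume e: "e \<in> ?E"
      show "insert e P \<in> F1"
      proof (rule ccontr)
        assume "insert e P \<notin> F1"
        hence "S - insert e P \<in> F2" using nG e by blast
        hence "e = h" using uniq[of e h] e h hF2 by blast
        thus False using e by simp
      qed
    qed
    have "card ?E = card (S - P) - 1" using h(1) fSP by (simp add: card_Diff_singleton)
    hence "card ?E \<noteq> 0" using c by simp
    hence neE: "?E \<noteq> {}" by (metis card.empty)
    have "P \<union> ?E \<in> F1" by (rule union_lemma[OF f1 fin _ neE _ allE]) (use fin in auto)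
    moreover have "P \<union> ?E = S - {h}" using PS h by auto
    ultimately show False using U h by auto
  qed
qed

lemma upchain_cons:
  assumes "upchain S F1 F2 (insert e P) ys" "Gs S F1 F2 P" "e \<in> S" "e \<notin> P"
  shows "upchain S F1 F2 P (e # ys)"
  unfolding upchain_def
proof (intro conjI allI impI)
  show "distinct (e # ys)" using assms(1) unfolding upchain_def by auto
  show "set (e # ys) = S - P" using assms(1,3,4) unfolding upchain_def by auto
  fix j assume j: "j < length (e # ys)"
  show "Gs S F1 F2 (P \<union> set (take j (e # ys)))"
  proof (cases j)
    case 0 thus ?thesis using assms(2) by simp
  next
    case (Suc j')
    hence "j' < length ys" using j by simp
    hence "Gs S F1 F2 (insert e P \<union> set (take j' ys))" using assms(1) unfolding upchain_def by blast
    moreover have "P \<union> set (take j (e # ys)) = insert e P \<union> set (take j' ys)" using Suc by auto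
    ultimately show ?thesis by simp
  qed
qed

lemma up_exists_aux:
  assumes f1: "fam S F1" and f2: "fam S F2" and fin: "finite S"
  shows "card (S - P) = k \<Longrightarrow> P \<subseteq> S \<Longrightarrow> Gs S F1 F2 P \<Longrightarrow> (\<forall>h\<in>S-P. S - {h} \<notin> F1)
     \<Longrightarrow> \<exists>ys. upchain S F1 F2 P ys"
proof (induction k arbitrary: P)
  case 0
  hence "S - P = {}" using fin by simp
  hence "upchain S F1 F2 P []" unfolding upchain_def by simp
  thus ?case by blast
next
  case (Suc k)
  show ?case
  proof (cases "k = 0")
    case True
    then obtain h where h: "S - P = {h}" using Suc.prems(1) card_1_singletonE by auto
    have "upchain S F1 F2 P [h]" unfolding upchain_def using h Suc.prems(3)
      by (auto simp: less_Suc_eq)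
    thus ?thesis by blast
  next
    case False
    hence "card (S - P) \<ge> 2" using Suc.prems(1) by simp
    then obtain e where e: "e \<in> S - P" "Gs S F1 F2 (insert e P)"
      using up_step[OF f1 f2 fin Suc.prems(2,3,4)] by blast
    have "card (S - insert e P) = k" using Suc.prems(1) e(1) fin
      by (metis Diff_insert card_Diff_singleton diff_Suc_1 finite_Diff)
    moreover have "insert e P \<subseteq> S" using e Suc.prems(2) by auto
    moreover have "\<forall>h\<in>S - insert e P. S - {h} \<notin> F1" using Suc.prems(4) by auto
    ultimately obtain ys where "upchain S F1 F2 (insert e P) ys" using Suc.IH e(2) by blast
    hence "upchain S F1 F2 P (e # ys)" using upchain_cons Suc.prems(3) e(1) by fastforce
    thus ?thesis by blast
  qed
qed

lemma up_exists:
  assumes "fam S F1" "fam S F2" "finite S" "P \<subseteq> S" "Gs S F1 F2 P" "\<forall>h\<in>S-P. S - {h} \<notin> F1"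
  shows "\<exists>ys. upchain S F1 F2 P ys"
  using up_exists_aux[OF assms(1,2,3) refl assms(4,5,6)] .

lemma set_drop_distinct:
  assumes "distinct xs" shows "set (drop k xs) = set xs - set (take k xs)"
proof -
  have "set (take k xs) \<inter> set (drop k xs) = {}"
    by (rule set_take_disj_set_drop_if_distinct[OF assms]) simp
  moreover have "set xs = set (take k xs) \<union> set (drop k xs)"
    by (metis append_take_drop_id set_append)
  ultimately show ?thesis by blast
qed

lemma combine:
  assumes fin: "finite S" and QS: "Q \<subseteq> S" and n1: "S \<notin> F1" and n2: "S \<notin> F2"
    and up: "upchain S F1 F2 Q ys" and dn: "upchain S F2 F1 (S - Q) zs"
  shows "\<not> order_consistent S F1 F2"
proof -
  let ?xs = "rev zs @ ys"
  have dz: "distinct zs" and sz: "set zs = Q" and Gz: "\<forall>j<length zs. Gs S F2 F1 ((S - Q) \<union> set (take j zs))"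
    using dn QS unfolding upchain_def by auto
  have dy: "distinct ys" and sy: "set ys = S - Q" and Gy: "\<forall>j<length ys. Gs S F1 F2 (Q \<union> set (take j ys))"
    using up unfolding upchain_def by auto
  have dxs: "distinct ?xs" using dz dy sz sy by auto
  have sxs: "set ?xs = S" using sz sy QS by auto
  have pref: "Gs S F1 F2 (set (take k ?xs))" if k: "1 \<le> k" "k < length ?xs" for k
  proof (cases "k \<le> length zs")
    case True
    let ?j = "length zs - k"
    have j: "?j < length zs" using True k by simp
    have "take k ?xs = take k (rev zs)" using True by simp
    also have "\<dots> = rev (drop ?j zs)" by (simp add: take_rev)
    finally have "set (take k ?xs) = set (drop ?j zs)" by simp
    also have "\<dots> = Q - set (take ?j zs)" using set_drop_distinct[OF dz] sz by simp
    finally have e1: "set (take k ?xs) = Q - set (take ?j zs)" .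
    have sub: "set (take ?j zs) \<subseteq> Q" using sz by (metis set_take_subset)
    have G: "Gs S F2 F1 ((S - Q) \<union> set (take ?j zs))" using Gz j by blast
    have "S - ((S - Q) \<union> set (take ?j zs)) = Q - set (take ?j zs)" using QS sub by blast
    moreover have "S - (Q - set (take ?j zs)) = (S - Q) \<union> set (take ?j zs)" using QS sub by blast
    ultimately show ?thesis using G e1 unfolding Gs_def by simp
  next
    case False
    let ?j = "k - length zs"
    have j: "?j < length ys" using False k by simp
    have "take k ?xs = rev zs @ take ?j ys" using False by simp
    hence "set (take k ?xs) = Q \<union> set (take ?j ys)" using sz by simp
    thus ?thesis using Gy j by simp
  qed
  have L: "length ?xs = card S" using distinct_card[OF dxs] sxs by simp
  have "\<forall>i\<in>{1..length ?xs}. set (take i ?xs) \<notin> F1 \<and> set (drop (i - 1) ?xs) \<notin> F2"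
  proof
    fix i assume i: "i \<in> {1..length ?xs}"
    have a: "set (take i ?xs) \<notin> F1"
    proof (cases "i < length ?xs")
      case True thus ?thesis using pref i unfolding Gs_def by auto
    next
      case False
      hence "take i ?xs = ?xs" by simp
      thus ?thesis using sxs n1 by simp
    qed
    have b0: "set (drop (i - 1) ?xs) = set ?xs - set (take (i - 1) ?xs)"
      by (rule set_drop_distinct[OF dxs])
    have b: "set (drop (i - 1) ?xs) = S - set (take (i - 1) ?xs)"
      unfolding b0 unfolding sxs ..
    have c: "set (drop (i - 1) ?xs) \<notin> F2"
    proof (cases "i = 1")
      case True thus ?thesis unfolding b using n2 by simp
    next
      case False
      hence "1 \<le> i - 1" "i - 1 < length ?xs" using i by auto
      hence "Gs S F1 F2 (set (take (i - 1) ?xs))" by (rule pref)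
      hence "S - set (take (i - 1) ?xs) \<notin> F2" unfolding Gs_def by blast
      thus ?thesis unfolding b .
    qed
    show "set (take i ?xs) \<notin> F1 \<and> set (drop (i - 1) ?xs) \<notin> F2" using a c by simp
  qed
  thus ?thesis unfolding order_consistent_def using dxs sxs by blast
qed

definition MF :: "'a set \<Rightarrow> 'a set set \<Rightarrow> 'a set set \<Rightarrow> bool" where
  "MF S F1 F2 \<longleftrightarrow> (\<forall>Q. Q \<subseteq> S \<longrightarrow> (\<forall>h\<in>S-Q. S - {h} \<notin> F1) \<longrightarrow> (\<forall>h\<in>Q. S - {h} \<notin> F2)
      \<longrightarrow> Q \<in> F1 \<or> S - Q \<in> F2)"

lemma master:
  assumes f1: "fam S F1" and f2: "fam S F2" and fin: "finite S" and oc: "order_consistent S F1 F2"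
  shows "MF S F1 F2"
  unfolding MF_def
proof (intro allI impI)
  fix Q assume QS: "Q \<subseteq> S" and U: "\<forall>h\<in>S-Q. S - {h} \<notin> F1" and D: "\<forall>h\<in>Q. S - {h} \<notin> F2"
  show "Q \<in> F1 \<or> S - Q \<in> F2"
  proof (rule ccontr)
    assume "\<not> ?thesis"
    hence G: "Gs S F1 F2 Q" unfolding Gs_def by simp
    obtain ys where ys: "upchain S F1 F2 Q ys" using up_exists[OF f1 f2 fin QS G U] by blast
    have SQ: "S - (S - Q) = Q" using QS by blast
    have G2: "Gs S F2 F1 (S - Q)" using G SQ unfolding Gs_def by simp
    have D2: "\<forall>h\<in>S-(S-Q). S - {h} \<notin> F2" using D SQ by simp
    obtain zs where zs: "upchain S F2 F1 (S - Q) zs" using up_exists[OF f2 f1 fin _ G2 D2] by blast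
    have "\<not> order_consistent S F1 F2"
      by (rule combine[OF fin QS fam_notS[OF f1] fam_notS[OF f2] ys zs])
    thus False using oc by simp
  qed
qed

lemma MF_sym: assumes "MF S F1 F2" shows "MF S F2 F1"
  unfolding MF_def
proof (intro allI impI)
  fix Q assume QS: "Q \<subseteq> S" and U: "\<forall>h\<in>S-Q. S - {h} \<notin> F2" and D: "\<forall>h\<in>Q. S - {h} \<notin> F1"
  have SQ: "S - (S - Q) = Q" using QS by blast
  have mf: "\<And>Q. Q \<subseteq> S \<Longrightarrow> (\<forall>h\<in>S-Q. S - {h} \<notin> F1) \<Longrightarrow> (\<forall>h\<in>Q. S - {h} \<notin> F2)
      \<Longrightarrow> Q \<in> F1 \<or> S - Q \<in> F2" using assms unfolding MF_def by blast
  have "S - Q \<in> F1 \<or> S - (S - Q) \<in> F2"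
    by (rule mf) (use U D SQ in auto)
  thus "Q \<in> F2 \<or> S - Q \<in> F1" using SQ by auto
qed

lemma goodpair_false:
  assumes f1: "fam S F1" and f2: "fam S F2" and fin: "finite S" and oc: "order_consistent S F1 F2"
    and x: "x \<in> S" and P: "P \<subseteq> S - {x}" and G1: "Gs S F1 F2 P" and G2: "Gs S F1 F2 (insert x P)"
    and U: "\<forall>h\<in>S - insert x P. S - {h} \<notin> F1" and D: "\<forall>h\<in>P. S - {h} \<notin> F2"
  shows False
proof -
  have xP: "insert x P \<subseteq> S" using x P by auto
  obtain ys where ys0: "upchain S F1 F2 (insert x P) ys" using up_exists[OF f1 f2 fin xP G2 U] by blast
  have xnP: "x \<notin> P" using P by blast
  have ys: "upchain S F1 F2 P (x # ys)" by (rule upchain_cons[OF ys0 G1 x xnP])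
  have PS: "P \<subseteq> S" using P by auto
  have SP: "S - (S - P) = P" using PS by blast
  have G3: "Gs S F2 F1 (S - P)" using G1 SP unfolding Gs_def by simp
  have D2: "\<forall>h\<in>S-(S-P). S - {h} \<notin> F2" using D SP by simp
  obtain zs where zs: "upchain S F2 F1 (S - P) zs" using up_exists[OF f2 f1 fin _ G3 D2] by blast
  have "\<not> order_consistent S F1 F2"
    by (rule combine[OF fin PS fam_notS[OF f1] fam_notS[OF f2] ys zs])
  thus False using oc by simp
qed

lemma exists_cosing:
  assumes f1: "fam S F1" and f2: "fam S F2" and fin: "finite S" and c: "card S \<ge> 2" and mf: "MF S F1 F2"
  shows "\<exists>x\<in>S. S - {x} \<in> F1"
proof (rule ccontr)
  assume no: "\<not> ?thesis"
  have sing: "{s} \<in> F1" if s: "s \<in> S" "S - {s} \<notin> F2" for s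
  proof -
    have mf': "\<And>Q. Q \<subseteq> S \<Longrightarrow> (\<forall>h\<in>S-Q. S - {h} \<notin> F1) \<Longrightarrow> (\<forall>h\<in>Q. S - {h} \<notin> F2)
      \<Longrightarrow> Q \<in> F1 \<or> S - Q \<in> F2" using mf unfolding MF_def by blast
    have "{s} \<in> F1 \<or> S - {s} \<in> F2"
      by (rule mf') (use s no in auto)
    thus ?thesis using s by simp
  qed
  show False
  proof (cases "\<exists>x2\<in>S. S - {x2} \<in> F2")
    case False
    hence "\<forall>s\<in>S. {s} \<in> F1" using sing by blast
    thus False using fam_notall[OF f1] by blast
  next
    case True
    then obtain x2 where x2: "x2 \<in> S" "S - {x2} \<in> F2" by blast
    have "\<forall>s\<in>S - {x2}. {s} \<in> F1"
    proof
      fix s assume s: "s \<in> S - {x2}"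
      have "S - {s} \<notin> F2" using cosing_unique[OF f2 fin _ x2(1) _ x2(2)] s by blast
      thus "{s} \<in> F1" using sing s by blast
    qed
    hence all: "\<forall>e\<in>S - {x2}. insert e {} \<in> F1" by simp
    have "card (S - {x2}) \<noteq> 0" using c x2 fin by (simp add: card_Diff_singleton)
    hence ne: "S - {x2} \<noteq> {}" by (metis card.empty)
    have "{} \<union> (S - {x2}) \<in> F1" by (rule union_lemma[OF f1 fin _ ne _ all]) (use fin in auto)
    thus False using no x2 by simp
  qed
qed

lemma card_Diff2:
  assumes "finite S" "a \<in> S" "b \<in> S" "a \<noteq> b" shows "card (S - {a,b}) = card S - 2"
  using assms by (simp add: card_Diff_subset)

lemma card_Diff3:
  assumes "finite S" "a \<in> S" "b \<in> S" "c \<in> S" "a \<noteq> b" "a \<noteq> c" "b \<noteq> c"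
  shows "card (S - {a,b,c}) = card S - 3"
  using assms by (simp add: card_Diff_subset)

lemma distinct_case:
  assumes f1: "fam S F1" and f2: "fam S F2" and fin: "finite S" and c3: "card S \<ge> 3"
    and mf: "MF S F1 F2" and x1: "x1 \<in> S" and x2: "x2 \<in> S" and ne: "x1 \<noteq> x2"
    and c1: "S - {x1} \<in> F1" and c2: "S - {x2} \<in> F2"
  shows "\<exists>A1 A2 B1 B2. A1 \<in> F1 \<and> A2 \<in> F2 \<and>
       card A1 = card S - 1 \<and> card A2 = card S - 1 \<and> A1 \<noteq> A2 \<and>
       B1 \<subseteq> S \<and> B2 \<subseteq> S \<and> card B1 = card S - 2 \<and> card B2 = card S - 2 \<and>
       B1 \<inter> A1 = B1 \<inter> B2 \<and> B2 \<inter> A2 = B1 \<inter> B2 \<and>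
       B1 \<inter> B2 \<subseteq> A1 \<inter> A2 \<and> card (B1 \<inter> B2) = card S - 3 \<and>
       (\<forall>b \<in> B1. {b} \<in> F1) \<and> (\<forall>b \<in> B2. {b} \<in> F2)"
proof -
  have mfr: "\<And>Q. Q \<subseteq> S \<Longrightarrow> (\<forall>h\<in>S-Q. S - {h} \<notin> F1) \<Longrightarrow> (\<forall>h\<in>Q. S - {h} \<notin> F2)
      \<Longrightarrow> Q \<in> F1 \<or> S - Q \<in> F2" using mf unfolding MF_def by blast
  have u1: "h = x1" if "h \<in> S" "S - {h} \<in> F1" for h
    by (rule cosing_unique[OF f1 fin that(1) x1 that(2) c1])
  have u2: "h = x2" if "h \<in> S" "S - {h} \<in> F2" for h
    by (rule cosing_unique[OF f2 fin that(1) x2 that(2) c2])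
  have T1x1: "{x1} \<in> F1"
  proof -
    have "{x1} \<in> F1 \<or> S - {x1} \<in> F2"
    proof (rule mfr)
      show "{x1} \<subseteq> S" using x1 by simp
      show "\<forall>h\<in>S-{x1}. S - {h} \<notin> F1" using u1 by blast
      show "\<forall>h\<in>{x1}. S - {h} \<notin> F2" using u2 x1 ne by blast
    qed
    thus ?thesis using u2 x1 ne by blast
  qed
  have T2x2: "{x2} \<in> F2"
  proof -
    have SS: "S - (S - {x2}) = {x2}" using x2 by blast
    have "S - {x2} \<in> F1 \<or> S - (S - {x2}) \<in> F2"
    proof (rule mfr)
      show "S - {x2} \<subseteq> S" by blast
      show "\<forall>h\<in>S-(S - {x2}). S - {h} \<notin> F1" using u1 x2 ne SS by auto
      show "\<forall>h\<in>S - {x2}. S - {h} \<notin> F2" using u2 by blast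
    qed
    thus ?thesis using u1 x2 ne SS by auto
  qed
  have b1: "{s} \<in> F1 \<or> S - {x1,s} \<in> F2" if s: "s \<in> S" "s \<noteq> x1" "s \<noteq> x2" for s
  proof -
    have "{x1,s} \<in> F1 \<or> S - {x1,s} \<in> F2"
    proof (rule mfr)
      show "{x1,s} \<subseteq> S" using x1 s by simp
      show "\<forall>h\<in>S-{x1,s}. S - {h} \<notin> F1" using u1 by blast
      show "\<forall>h\<in>{x1,s}. S - {h} \<notin> F2" using u2 ne s x1 by blast
    qed
    moreover have "{s} \<in> F1" if "{x1,s} \<in> F1"
    proof -
      have "{x1,s} - {s} \<in> F1" using T1x1 s by (simp add: insert_Diff_if)
      hence "{x1,s} - {x1} \<in> F1" using adj_down[OF f1 fin that _ _ _, of s x1] by simp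
      thus ?thesis using s by (simp add: insert_Diff_if)
    qed
    ultimately show ?thesis by blast
  qed
  have b2: "{s} \<in> F2 \<or> S - {x2,s} \<in> F1" if s: "s \<in> S" "s \<noteq> x1" "s \<noteq> x2" for s
  proof -
    have SS: "S - (S - {x2,s}) = {x2,s}" using x2 s by blast
    have "S - {x2,s} \<in> F1 \<or> S - (S - {x2,s}) \<in> F2"
    proof (rule mfr)
      show "S - {x2,s} \<subseteq> S" by blast
      show "\<forall>h\<in>S-(S - {x2,s}). S - {h} \<notin> F1" unfolding SS using u1 ne s x2 by blast
      show "\<forall>h\<in>S - {x2,s}. S - {h} \<notin> F2" using u2 by blast
    qed
    hence "S - {x2,s} \<in> F1 \<or> {x2,s} \<in> F2" using SS by simp
    moreover have "{s} \<in> F2" if "{x2,s} \<in> F2"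
    proof -
      have "{x2,s} - {s} \<in> F2" using T2x2 s by (simp add: insert_Diff_if)
      hence "{x2,s} - {x2} \<in> F2" using adj_down[OF f2 fin that _ _ _, of s x2] by simp
      thus ?thesis using s by (simp add: insert_Diff_if)
    qed
    ultimately show ?thesis by blast
  qed
  have bad1u: "s = t" if "s \<in> S" "t \<in> S" "s \<noteq> x1" "t \<noteq> x1" "S - {x1,s} \<in> F2" "S - {x1,t} \<in> F2" for s t
  proof (rule ccontr)
    assume st: "s \<noteq> t"
    let ?Q = "S - {x1,s,t}"
    have "insert t ?Q = S - {x1,s}" "insert s ?Q = S - {x1,t}" using that st by auto
    hence i: "insert s ?Q \<in> F2" "insert t ?Q \<in> F2" using that by simp_all
    have "insert s (insert t ?Q) \<in> F2" by (rule adj_union[OF f2 fin i]) (use st in auto)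
    moreover have "insert s (insert t ?Q) = S - {x1}" using that by auto
    ultimately have "x1 = x2" using u2 x1 by simp
    thus False using ne by simp
  qed
  have bad2u: "s = t" if "s \<in> S" "t \<in> S" "s \<noteq> x2" "t \<noteq> x2" "S - {x2,s} \<in> F1" "S - {x2,t} \<in> F1" for s t
  proof (rule ccontr)
    assume st: "s \<noteq> t"
    let ?Q = "S - {x2,s,t}"
    have "insert t ?Q = S - {x2,s}" "insert s ?Q = S - {x2,t}" using that st by auto
    hence i: "insert s ?Q \<in> F1" "insert t ?Q \<in> F1" using that by simp_all
    have "insert s (insert t ?Q) \<in> F1" by (rule adj_union[OF f1 fin i]) (use st in auto)
    moreover have "insert s (insert t ?Q) = S - {x2}" using that by auto
    ultimately have "x2 = x1" using u1 x2 by simp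
    thus False using ne by simp
  qed
  have mixed: False if "s \<in> S" "t \<in> S" "s \<noteq> x1" "s \<noteq> x2" "t \<noteq> x1" "t \<noteq> x2" "s \<noteq> t"
       "{s} \<notin> F1" "{t} \<notin> F2" for s t
  proof -
    have Ss: "S - {x1,s} \<in> F2" using b1 that by blast
    have St: "S - {x2,t} \<in> F1" using b2 that by blast
    have allT: "\<forall>e\<in>S - {x2,s}. insert e {} \<in> F1"
    proof
      fix e assume e: "e \<in> S - {x2,s}"
      show "insert e {} \<in> F1"
      proof (cases "e = x1")
        case True thus ?thesis using T1x1 by simp
      next
        case False
        show ?thesis
        proof (rule ccontr)
          assume "insert e {} \<notin> F1"
          hence "S - {x1,e} \<in> F2" using b1[of e] e False by auto
          hence "e = s" using bad1u[of e s] e False that Ss by blast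
          thus False using e by simp
        qed
      qed
    qed
    have "x1 \<in> S - {x2,s}" using x1 ne that by auto
    hence nE: "S - {x2,s} \<noteq> {}" by blast
    have "{} \<union> (S - {x2,s}) \<in> F1" by (rule union_lemma[OF f1 fin _ nE _ allT]) (use fin in auto)
    hence Ss1: "S - {x2,s} \<in> F1" by simp
    have "s = t" by (rule bad2u[OF that(1,2) that(4) that(6) Ss1 St])
    thus False using that by simp
  qed
  have "card (S - {x1,x2}) \<ge> 1" using card_Diff2[OF fin x1 x2 ne] c3 by simp
  then obtain y0 where y0: "y0 \<in> S - {x1,x2}" by (metis card.empty all_not_in_conv not_one_le_zero)
  obtain y where y: "y \<in> S" "y \<noteq> x1" "y \<noteq> x2"
    and yall: "\<forall>t\<in>S. t \<noteq> x1 \<longrightarrow> t \<noteq> x2 \<longrightarrow> t \<noteq> y \<longrightarrow> {t} \<in> F1 \<and> {t} \<in> F2"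
  proof (cases "\<exists>s\<in>S. s \<noteq> x1 \<and> s \<noteq> x2 \<and> \<not> ({s} \<in> F1 \<and> {s} \<in> F2)")
    case False
    thus ?thesis using that y0 by blast
  next
    case True
    then obtain s where s: "s \<in> S" "s \<noteq> x1" "s \<noteq> x2" "\<not> ({s} \<in> F1 \<and> {s} \<in> F2)" by blast
    have "\<forall>t\<in>S. t \<noteq> x1 \<longrightarrow> t \<noteq> x2 \<longrightarrow> t \<noteq> s \<longrightarrow> {t} \<in> F1 \<and> {t} \<in> F2"
    proof (intro ballI impI)
      fix t assume t: "t \<in> S" "t \<noteq> x1" "t \<noteq> x2" "t \<noteq> s"
      show "{t} \<in> F1 \<and> {t} \<in> F2"
      proof (rule ccontr)
        assume nt: "\<not> ({t} \<in> F1 \<and> {t} \<in> F2)"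
        show False
        proof (cases "{t} \<in> F1")
          case False
          show False
          proof (cases "{s} \<in> F1")
            case False': False
            have "S - {x1,t} \<in> F2" "S - {x1,s} \<in> F2" using b1 t s \<open>{t} \<notin> F1\<close> False' by blast+
            hence "t = s" using bad1u[of t s] t s by blast
            thus False using t by simp
          next
            case True
            hence "{s} \<notin> F2" using s by blast
            thus False using mixed[of t s] t s \<open>{t} \<notin> F1\<close> by blast
          qed
        next
          case True
          hence t2: "{t} \<notin> F2" using nt by blast
          show False
          proof (cases "{s} \<in> F2")
            case False': False
            have "S - {x2,t} \<in> F1" "S - {x2,s} \<in> F1" using b2 t s t2 False' by blast+
            hence "t = s" using bad2u[of t s] t s by blast
            thus False using t by simp
          next
            case True
            hence "{s} \<notin> F1" using s by blast
            thus False using mixed[of s t] t s t2 by blast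
          qed
        qed
      qed
    qed
    thus ?thesis using that s by blast
  qed
  let ?A1 = "S - {x1}" and ?A2 = "S - {x2}" and ?B1 = "S - {x2,y}" and ?B2 = "S - {x1,y}"
  have cA1: "card ?A1 = card S - 1" using fin x1 by (simp add: card_Diff_singleton)
  have cA2: "card ?A2 = card S - 1" using fin x2 by (simp add: card_Diff_singleton)
  have neA: "?A1 \<noteq> ?A2" using x1 ne by blast
  have cB1: "card ?B1 = card S - 2" using card_Diff2[OF fin x2 y(1)] y by simp
  have cB2: "card ?B2 = card S - 2" using card_Diff2[OF fin x1 y(1)] y by simp
  have I: "?B1 \<inter> ?B2 = S - {x1,x2,y}" by blast
  have i1: "?B1 \<inter> ?A1 = ?B1 \<inter> ?B2" by blast
  have i2: "?B2 \<inter> ?A2 = ?B1 \<inter> ?B2" by blast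
  have i3: "?B1 \<inter> ?B2 \<subseteq> ?A1 \<inter> ?A2" by blast
  have cI: "card (?B1 \<inter> ?B2) = card S - 3" unfolding I using card_Diff3[OF fin x1 x2 y(1) ne] y by simp
  have s1: "\<forall>b \<in> ?B1. {b} \<in> F1"
  proof
    fix b assume b: "b \<in> ?B1"
    show "{b} \<in> F1" by (cases "b = x1") (use yall T1x1 b in auto)
  qed
  have s2: "\<forall>b \<in> ?B2. {b} \<in> F2"
  proof
    fix b assume b: "b \<in> ?B2"
    show "{b} \<in> F2" by (cases "b = x2") (use yall T2x2 b in auto)
  qed
  show ?thesis
    apply (rule exI[of _ ?A1], rule exI[of _ ?A2], rule exI[of _ ?B1], rule exI[of _ ?B2])
    using c1 c2 cA1 cA2 neA cB1 cB2 i1 i2 i3 cI s1 s2 by blast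
qed

definition Phi :: "'a set \<Rightarrow> 'a \<Rightarrow> 'a set set \<Rightarrow> nat \<Rightarrow> bool" where
  "Phi S x F k \<longleftrightarrow> (\<forall>C. C \<subseteq> S - {x} \<and> card C = k \<longrightarrow> C \<in> F)"

definition NG :: "'a set \<Rightarrow> 'a set set \<Rightarrow> 'a set set \<Rightarrow> 'a \<Rightarrow> bool" where
  "NG S F1 F2 x \<longleftrightarrow> (\<forall>P. P \<subseteq> S - {x} \<longrightarrow> P \<in> F1 \<or> insert x P \<in> F1 \<or>
      (S - {x}) - P \<in> F2 \<or> insert x ((S - {x}) - P) \<in> F2)"

definition s4 :: "'a set \<Rightarrow> 'a set set \<Rightarrow> 'a set set \<Rightarrow> bool" where
  "s4 S F1 F2 \<longleftrightarrow> (\<forall>k x. 1 \<le> k \<and> k \<le> card S - 1 \<and> x \<in> S \<longrightarrow> Phi S x F1 k \<longrightarrow> \<not> Phi S x F2 (card S - k))"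

lemma s4_sym: assumes "s4 S F1 F2" shows "s4 S F2 F1"
  unfolding s4_def
proof (intro allI impI notI)
  fix k x assume k: "1 \<le> k \<and> k \<le> card S - 1 \<and> x \<in> S" and p2: "Phi S x F2 k" and p1: "Phi S x F1 (card S - k)"
  have "1 \<le> card S - k \<and> card S - k \<le> card S - 1 \<and> x \<in> S" using k by auto
  moreover have "card S - (card S - k) = k" using k by auto
  ultimately show False using assms p1 p2 unfolding s4_def by metis
qed

lemma NG_sym: assumes "NG S F1 F2 x" shows "NG S F2 F1 x"
  unfolding NG_def
proof (intro allI impI)
  fix P assume P: "P \<subseteq> S - {x}"
  have "(S - {x}) - P \<subseteq> S - {x}" by blast
  hence "(S - {x}) - P \<in> F1 \<or> insert x ((S - {x}) - P) \<in> F1 \<or>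
      (S - {x}) - ((S - {x}) - P) \<in> F2 \<or> insert x ((S - {x}) - ((S - {x}) - P)) \<in> F2"
    using assms unfolding NG_def by blast
  moreover have "(S - {x}) - ((S - {x}) - P) = P" using P by blast
  ultimately show "P \<in> F2 \<or> insert x P \<in> F2 \<or> (S - {x}) - P \<in> F1 \<or> insert x ((S - {x}) - P) \<in> F1"
    by auto
qed

lemma NG_from_OC:
  assumes f1: "fam S F1" and f2: "fam S F2" and fin: "finite S" and oc: "order_consistent S F1 F2"
    and x: "x \<in> S" and v1: "S - {x} \<in> F1" and v2: "S - {x} \<in> F2"
  shows "NG S F1 F2 x"
  unfolding NG_def
proof (intro allI impI)
  fix P assume P: "P \<subseteq> S - {x}"
  show "P \<in> F1 \<or> insert x P \<in> F1 \<or> (S - {x}) - P \<in> F2 \<or> insert x ((S - {x}) - P) \<in> F2"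
  proof (rule ccontr)
    assume "\<not> ?thesis"
    hence n: "P \<notin> F1" "insert x P \<notin> F1" "(S - {x}) - P \<notin> F2" "insert x ((S - {x}) - P) \<notin> F2" by auto
    have e1: "S - P = insert x ((S - {x}) - P)" using P x by blast
    have e2: "S - insert x P = (S - {x}) - P" by blast
    have G1: "Gs S F1 F2 P" unfolding Gs_def e1 using n by simp
    have G2: "Gs S F1 F2 (insert x P)" unfolding Gs_def e2 using n by simp
    have U: "\<forall>h\<in>S - insert x P. S - {h} \<notin> F1"
    proof
      fix h assume h: "h \<in> S - insert x P"
      show "S - {h} \<notin> F1"
      proof
        assume "S - {h} \<in> F1"
        hence "h = x" using cosing_unique[OF f1 fin _ x _ v1] h by blast
        thus False using h by simp
      qed
    qed
    have D: "\<forall>h\<in>P. S - {h} \<notin> F2"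
    proof
      fix h assume h: "h \<in> P"
      show "S - {h} \<notin> F2"
      proof
        assume "S - {h} \<in> F2"
        hence "h = x" using cosing_unique[OF f2 fin _ x _ v2] h P by blast
        thus False using h P by blast
      qed
    qed
    show False by (rule goodpair_false[OF f1 f2 fin oc x P G1 G2 U D])
  qed
qed

lemma johnson:
  assumes fin: "finite V"
    and step: "\<And>P p y. P \<subseteq> V \<Longrightarrow> card P = k \<Longrightarrow> Pr P \<Longrightarrow> p \<in> P \<Longrightarrow> y \<in> V \<Longrightarrow> y \<notin> P
       \<Longrightarrow> Pr (insert y (P - {p}))"
  shows "P0 \<subseteq> V \<Longrightarrow> card P0 = k \<Longrightarrow> Pr P0 \<Longrightarrow> P' \<subseteq> V \<Longrightarrow> card P' = k \<Longrightarrow> Pr P'"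
proof (induction "card (P0 - P')" arbitrary: P0)
  case 0
  have fP0: "finite P0" using "0.prems"(1) fin finite_subset by blast
  have fP': "finite P'" using "0.prems"(4) fin finite_subset by blast
  have "P0 - P' = {}" using "0.hyps" fP0 by simp
  hence "P0 \<subseteq> P'" by blast
  hence "P0 = P'" using card_subset_eq[OF fP' _ ] "0.prems" by metis
  thus ?case using "0.prems" by simp
next
  case (Suc t)
  have fP0: "finite P0" using Suc.prems(1) fin finite_subset by blast
  have fP': "finite P'" using Suc.prems(4) fin finite_subset by blast
  have "P0 - P' \<noteq> {}" using Suc.hyps(2) by (metis card.empty nat.distinct(1))
  then obtain p where p: "p \<in> P0" "p \<notin> P'" by blast
  have "\<not> P' \<subseteq> P0"
  proof
    assume "P' \<subseteq> P0"
    hence "P' = P0" using card_subset_eq[OF fP0] Suc.prems by metis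
    thus False using p by simp
  qed
  then obtain y where y: "y \<in> P'" "y \<notin> P0" by blast
  let ?P1 = "insert y (P0 - {p})"
  have P1V: "?P1 \<subseteq> V" using Suc.prems(1,4) y p by blast
  have "card (P0 - {p}) = k - 1" using fP0 p Suc.prems(2) by (simp add: card_Diff_singleton)
  moreover have "k \<ge> 1" using fP0 p Suc.prems(2) by (metis card_0_eq empty_iff less_one not_le)
  ultimately have cP1: "card ?P1 = k" using fP0 y by simp
  have PrP1: "Pr ?P1" using step[OF Suc.prems(1,2,3) p(1), of y] y Suc.prems(4) by blast
  have "?P1 - P' = (P0 - P') - {p}" using y by blast
  hence "card (?P1 - P') = t" using Suc.hyps(2) p fP0 by (simp add: card_Diff_singleton)
  thus ?case using Suc.hyps(1)[of ?P1] P1V cP1 PrP1 Suc.prems(4,5) by simp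
qed

lemma lift:
  assumes f: "fam S F" and fin: "finite S" and VS: "V \<subseteq> S" and ZV: "Z \<inter> V = {}"
    and base: "\<forall>Q. Q \<subseteq> V \<and> card Q = j \<longrightarrow> Z \<union> Q \<in> F" and j1: "1 \<le> j"
  shows "j \<le> l \<Longrightarrow> \<forall>Q. Q \<subseteq> V \<and> card Q = l \<longrightarrow> Z \<union> Q \<in> F"
proof (induction l)
  case 0 thus ?case using j1 by simp
next
  case (Suc l)
  show ?case
  proof (cases "j = Suc l")
    case True thus ?thesis using base by simp
  next
    case False
    hence jl: "j \<le> l" using Suc.prems by simp
    have IH: "\<forall>Q. Q \<subseteq> V \<and> card Q = l \<longrightarrow> Z \<union> Q \<in> F" using Suc.IH jl by blast
    show ?thesis
    proof (intro allI impI)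
      fix Q assume Q: "Q \<subseteq> V \<and> card Q = Suc l"
      have "Q \<subseteq> S" using Q VS by blast
      hence fQ: "finite Q" using fin by (rule finite_subset)
      have "Q \<noteq> {}" using Q by auto
      then obtain q1 where q1: "q1 \<in> Q" by blast
      have "card (Q - {q1}) = l" using Q q1 fQ by (simp add: card_Diff_singleton)
      moreover have "l \<noteq> 0" using jl j1 by simp
      ultimately have "card (Q - {q1}) \<noteq> 0" by simp
      hence "Q - {q1} \<noteq> {}" by (metis card.empty)
      then obtain q2 where q2: "q2 \<in> Q" "q2 \<noteq> q1" by blast
      let ?Q0 = "Z \<union> (Q - {q1,q2})"
      have e1: "insert q1 ?Q0 = Z \<union> (Q - {q2})" using q1 q2 by auto
      have e2: "insert q2 ?Q0 = Z \<union> (Q - {q1})" using q1 q2 by auto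
      have c1: "card (Q - {q2}) = l" using Q q2 fQ by (simp add: card_Diff_singleton)
      have c2: "card (Q - {q1}) = l" using Q q1 fQ by (simp add: card_Diff_singleton)
      have i1: "insert q1 ?Q0 \<in> F" unfolding e1 using IH c1 Q by blast
      have i2: "insert q2 ?Q0 \<in> F" unfolding e2 using IH c2 Q by blast
      have n1: "q1 \<notin> ?Q0" using q1 Q ZV by blast
      have n2: "q2 \<notin> ?Q0" using q2 Q ZV by blast
      have "insert q1 (insert q2 ?Q0) \<in> F" by (rule adj_union[OF f fin i1 i2 n1 n2]) (use q2 in simp)
      moreover have "insert q1 (insert q2 ?Q0) = Z \<union> Q" using q1 q2 by auto
      ultimately show "Z \<union> Q \<in> F" by simp
    qed
  qed
qed

lemma spread:
  assumes f: "fam S F" and fin: "finite S" and ph: "Phi S x F (Suc k)"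
    and C: "C \<subseteq> S - {x}" "card C = k" "C \<in> F"
  shows "Phi S x F k"
  unfolding Phi_def
proof (intro allI impI)
  fix C' assume C': "C' \<subseteq> S - {x} \<and> card C' = k"
  have fV: "finite (S - {x})" using fin by simp
  show "C' \<in> F"
  proof (rule johnson[OF fV, where Pr="\<lambda>P. P \<in> F" and k=k])
    fix P p y assume P: "P \<subseteq> S - {x}" "card P = k" "P \<in> F" "p \<in> P" "y \<in> S - {x}" "y \<notin> P"
    have fP: "finite P" using P(1) fV finite_subset by blast
    have "insert y P \<in> F" using ph P fP unfolding Phi_def by auto
    moreover have "insert y P - {y} = P" using P(6) by simp
    ultimately have "insert y P - {p} \<in> F" using adj_down[OF f fin, of "insert y P" y p] P by simp
    moreover have "insert y P - {p} = insert y (P - {p})" using P by auto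
    ultimately show "insert y (P - {p}) \<in> F" by simp
  qed (use C C' in auto)
qed

lemma swap:
  assumes f: "fam S F" and fin: "finite S" and x: "x \<in> S" and ph: "Phi S x F (Suc k)"
    and k1: "1 \<le> k" and km: "Suc k \<le> card (S - {x})"
    and P0: "P0 \<subseteq> S - {x}" "card P0 = k" "insert x P0 \<in> F"
  shows False
proof -
  let ?V = "S - {x}"
  have fV: "finite ?V" using fin by simp
  have all: "\<forall>Q. Q \<subseteq> ?V \<and> card Q = k \<longrightarrow> {x} \<union> Q \<in> F"
  proof (intro allI impI)
    fix Q assume Q: "Q \<subseteq> ?V \<and> card Q = k"
    have "insert x Q \<in> F"
    proof (rule johnson[OF fV, where Pr="\<lambda>P. insert x P \<in> F" and k=k])
      fix P p y assume P: "P \<subseteq> ?V" "card P = k" "insert x P \<in> F" "p \<in> P" "y \<in> ?V" "y \<notin> P"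
      have fP: "finite P" using P(1) fV by (rule finite_subset)
      have yP: "insert y P \<in> F" using ph P fP unfolding Phi_def by auto
      have xP: "x \<notin> P" using P(1) by blast
      have xy: "x \<noteq> y" using P(5) by blast
      have A: "insert x (insert y P) \<in> F" by (rule adj_union[OF f fin P(3) yP xP P(6) xy])
      have "insert x (insert y P) - {y} = insert x P" using P(6) xy by auto
      hence "insert x (insert y P) - {p} \<in> F" using adj_down[OF f fin A, of y p] P(3,4) by simp
      moreover have "insert x (insert y P) - {p} = insert x (insert y (P - {p}))" using P xP by auto
      ultimately show "insert x (insert y (P - {p})) \<in> F" by simp
    qed (use P0 Q in auto)
    thus "{x} \<union> Q \<in> F" by simp
  qed
  have VS: "?V \<subseteq> S" by blast
  have top: "\<forall>Q. Q \<subseteq> ?V \<and> card Q = card ?V - 1 \<longrightarrow> {x} \<union> Q \<in> F"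
    by (rule lift[OF f fin VS _ all k1]) (use km in auto)
  have ph': "\<forall>Q. Q \<subseteq> ?V \<and> card Q = Suc k \<longrightarrow> {} \<union> Q \<in> F" using ph unfolding Phi_def by simp
  have "\<forall>Q. Q \<subseteq> ?V \<and> card Q = card ?V \<longrightarrow> {} \<union> Q \<in> F"
    by (rule lift[OF f fin VS _ ph']) (use km in auto)
  hence VF: "?V \<in> F" by simp
  have "card ?V \<noteq> 0" using km by simp
  hence "?V \<noteq> {}" by (metis card.empty)
  then obtain v where v: "v \<in> ?V" by blast
  have "card (?V - {v}) = card ?V - 1" by (rule card_Diff_singleton[OF v])
  hence "?V - {v} \<subseteq> ?V \<and> card (?V - {v}) = card ?V - 1" by blast
  hence "{x} \<union> (?V - {v}) \<in> F" by (rule top[rule_format])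
  moreover have "{x} \<union> (?V - {v}) = S - {v}" using x v by auto
  ultimately have "S - {v} \<in> F" by simp
  hence "v = x" using cosing_unique[OF f fin _ x _ VF] v by blast
  thus False using v by simp
qed

lemma three_elems:
  assumes "finite A" "card A \<ge> 3"
  shows "\<exists>a b c. a \<in> A \<and> b \<in> A \<and> c \<in> A \<and> a \<noteq> b \<and> a \<noteq> c \<and> b \<noteq> c"
proof -
  have "A \<noteq> {}" using assms by auto
  then obtain a where a: "a \<in> A" by blast
  have "card (A - {a}) \<ge> 2" using assms a by (simp add: card_Diff_singleton)
  hence "A - {a} \<noteq> {}" by (metis card.empty not_numeral_le_zero)
  then obtain b where b: "b \<in> A" "b \<noteq> a" by blast
  have "card (A - {a,b}) \<ge> 1" using assms a b by (simp add: card_Diff_subset)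
  hence "A - {a,b} \<noteq> {}" by (metis card.empty not_one_le_zero)
  then obtain c where c: "c \<in> A" "c \<noteq> a" "c \<noteq> b" by blast
  show ?thesis using a b c by blast
qed

lemma pigeon:
  assumes f: "fam S F" and fin: "finite S" and x: "x \<in> S"
    and col: "\<forall>Q. Q \<subseteq> S - {x} \<and> card Q = d \<longrightarrow> Q \<in> F \<or> insert x Q \<in> F" and d2: "2 \<le> d"
  shows "Phi S x F (Suc d)"
  unfolding Phi_def
proof (intro allI impI)
  fix W assume W: "W \<subseteq> S - {x} \<and> card W = Suc d"
  have "W \<subseteq> S" using W by blast
  hence fW: "finite W" using fin by (rule finite_subset)
  have xW: "x \<notin> W" using W by blast
  have cW: "card (W - {a}) = d" if "a \<in> W" for a using W that fW by (simp add: card_Diff_singleton)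
  have ty: "W - {a} \<in> F \<or> insert x (W - {a}) \<in> F" if "a \<in> W" for a
  proof -
    have "W - {a} \<subseteq> S - {x} \<and> card (W - {a}) = d" using W cW[OF that] by blast
    thus ?thesis by (rule col[rule_format])
  qed
  have p0: "W \<in> F" if "a \<in> W" "b \<in> W" "a \<noteq> b" "W - {a} \<in> F" "W - {b} \<in> F" for a b
  proof -
    let ?Q = "W - {a,b}"
    have "insert b ?Q = W - {a}" "insert a ?Q = W - {b}" using that by auto
    hence i: "insert a ?Q \<in> F" "insert b ?Q \<in> F" using that by simp_all
    have "insert a (insert b ?Q) \<in> F" by (rule adj_union[OF f fin i]) (use that in auto)
    moreover have "insert a (insert b ?Q) = W" using that by auto
    ultimately show ?thesis by simp
  qed
  have p1: "W \<in> F" if "a \<in> W" "b \<in> W" "a \<noteq> b" "insert x (W - {a}) \<in> F" "insert x (W - {b}) \<in> F" for a b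
  proof -
    let ?Q = "insert x (W - {a,b})"
    have "insert b ?Q = insert x (W - {a})" "insert a ?Q = insert x (W - {b})" using that by auto
    hence i: "insert a ?Q \<in> F" "insert b ?Q \<in> F" using that by simp_all
    have A: "insert a (insert b ?Q) \<in> F" by (rule adj_union[OF f fin i]) (use that xW in auto)
    have e: "insert a (insert b ?Q) = insert x W" using that by auto
    have "insert x W - {a} = insert x (W - {a})" using that xW by auto
    hence "insert x W - {a} \<in> F" using that by simp
    hence "insert x W - {x} \<in> F" using adj_down[OF f fin, of "insert x W" a x] A e that by simp
    thus ?thesis using xW by simp
  qed
  have "card W \<ge> 3" using W d2 by simp
  then obtain a b c where abc: "a \<in> W" "b \<in> W" "c \<in> W" "a \<noteq> b" "a \<noteq> c" "b \<noteq> c"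
    using three_elems[OF fW] by blast
  note t1 = ty[OF abc(1)] and t2 = ty[OF abc(2)] and t3 = ty[OF abc(3)]
  note q1 = p0[OF abc(1,2,4)] and q2 = p0[OF abc(1,3,5)] and q3 = p0[OF abc(2,3,6)]
  note r1 = p1[OF abc(1,2,4)] and r2 = p1[OF abc(1,3,5)] and r3 = p1[OF abc(2,3,6)]
  show "W \<in> F"
  proof (cases "W - {a} \<in> F")
    case A: True
    show ?thesis
    proof (cases "W - {b} \<in> F")
      case True thus ?thesis using q1 A by simp
    next
      case B: False
      show ?thesis
      proof (cases "W - {c} \<in> F")
        case True thus ?thesis using q2 A by simp
      next
        case False thus ?thesis using r3 t2 t3 B by simp
      qed
    qed
  next
    case A: False
    show ?thesis
    proof (cases "W - {b} \<in> F")
      case B: True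
      show ?thesis
      proof (cases "W - {c} \<in> F")
        case True thus ?thesis using q3 B by simp
      next
        case False thus ?thesis using r2 t1 t3 A by simp
      qed
    next
      case B: False thus ?thesis using r1 t1 t2 A by simp
    qed
  qed
qed

lemma halfcase:
  assumes f1: "fam S F1" and f2: "fam S F2" and fin: "finite S" and x: "x \<in> S"
    and ng: "NG S F1 F2 x" and s: "s4 S F1 F2"
    and a2: "2 \<le> a" and am: "Suc a \<le> card (S - {x})" and pa: "Phi S x F1 a" and npa: "\<not> Phi S x F1 (a - 1)"
  shows False
proof -
  let ?V = "S - {x}"
  have fV: "finite ?V" using fin by simp
  have mn: "card ?V = card S - 1" by (rule card_Diff_singleton[OF x])
  let ?d = "card S - a"
  have npd: "\<not> Phi S x F2 ?d"
  proof -
    have "1 \<le> a \<and> a \<le> card S - 1 \<and> x \<in> S" using a2 am mn x by simp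
    thus ?thesis using s pa unfolding s4_def by blast
  qed
  have pa': "Phi S x F1 (Suc (a - 1))" using pa a2 by simp
  have A: "P \<notin> F1" if "P \<subseteq> ?V" "card P = a - 1" for P
  proof
    assume "P \<in> F1"
    hence "Phi S x F1 (a - 1)" by (rule spread[OF f1 fin pa' that])
    thus False using npa by simp
  qed
  have B: "insert x P \<notin> F1" if "P \<subseteq> ?V" "card P = a - 1" for P
  proof
    assume "insert x P \<in> F1"
    show False by (rule swap[OF f1 fin x pa' _ _ that \<open>insert x P \<in> F1\<close>]) (use a2 am in auto)
  qed
  have C: "D \<in> F2 \<or> insert x D \<in> F2" if D: "D \<subseteq> ?V" "card D = ?d" for D
  proof -
    let ?P = "?V - D"
    have fD: "finite D" using D(1) fV by (rule finite_subset)
    have cP: "card ?P = a - 1" using card_Diff_subset[OF fD D(1)] D(2) mn am by simp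
    have PV: "?P \<subseteq> ?V" by blast
    have VP: "?V - ?P = D" using D(1) by blast
    have "?P \<in> F1 \<or> insert x ?P \<in> F1 \<or> ?V - ?P \<in> F2 \<or> insert x (?V - ?P) \<in> F2"
      using ng PV unfolding NG_def by blast
    thus ?thesis using A[OF PV cP] B[OF PV cP] VP by simp
  qed
  have C': "\<forall>D. D \<subseteq> ?V \<and> card D = ?d \<longrightarrow> D \<in> F2 \<or> insert x D \<in> F2" using C by blast
  have d2: "2 \<le> ?d" using am mn by simp
  have pd: "Phi S x F2 (Suc ?d)" by (rule pigeon[OF f2 fin x C' d2])
  have "?d \<le> card ?V" using mn a2 by simp
  then obtain D0 where D0: "D0 \<subseteq> ?V" "card D0 = ?d" by (rule obtain_subset_with_card_n)
  show False
  proof (cases "D0 \<in> F2")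
    case True
    hence "Phi S x F2 ?d" by (rule spread[OF f2 fin pd D0])
    thus False using npd by simp
  next
    case False
    hence "insert x D0 \<in> F2" using C[OF D0] by simp
    show False by (rule swap[OF f2 fin x pd _ _ D0 \<open>insert x D0 \<in> F2\<close>]) (use d2 a2 mn am in auto)
  qed
qed

lemma pig3: "(A1 \<or> B1) \<Longrightarrow> (A2 \<or> B2) \<Longrightarrow> (A3 \<or> B3) \<Longrightarrow> \<not>(A1 \<and> A2) \<Longrightarrow> \<not>(A1 \<and> A3) \<Longrightarrow> \<not>(A2 \<and> A3)
   \<Longrightarrow> \<not>(B1 \<and> B2) \<Longrightarrow> \<not>(B1 \<and> B3) \<Longrightarrow> \<not>(B2 \<and> B3) \<Longrightarrow> False"
  by blast

lemma remaining:
  assumes f1: "fam S F1" and f2: "fam S F2" and fin: "finite S" and x: "x \<in> S"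
    and v1: "S - {x} \<in> F1" and v2: "S - {x} \<in> F2" and ng: "NG S F1 F2 x"
    and n1: "\<not> Phi S x F1 (card (S - {x}) - 1)" and n2: "\<not> Phi S x F2 (card (S - {x}) - 1)"
    and m2: "2 \<le> card (S - {x})"
  shows "card (S - {x}) = 4 \<and> (\<exists>R W. R \<inter> W = {} \<and> R \<union> W = S - {x} \<and> card R = 2 \<and> card W = 2 \<and>
           (\<forall>r\<in>R. \<forall>w\<in>W. {r,w} \<notin> F1 \<and> insert x {r,w} \<notin> F1))"
proof -
  let ?V = "S - {x}"
  let ?m = "card ?V"
  have fV: "finite ?V" using fin by simp
  have pm: "Phi S x F (Suc (?m - 1))" if "?V \<in> F" for F
    unfolding Phi_def
  proof (intro allI impI)
    fix C assume C: "C \<subseteq> ?V \<and> card C = Suc (?m - 1)"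
    hence "C = ?V" using card_subset_eq[OF fV] m2 by auto
    thus "C \<in> F" using that by simp
  qed
  have R01: "P \<notin> F1" if "P \<subseteq> ?V" "card P = ?m - 1" for P
  proof
    assume "P \<in> F1"
    hence "Phi S x F1 (?m - 1)" by (rule spread[OF f1 fin pm[OF v1] that])
    thus False using n1 by simp
  qed
  have R02: "P \<notin> F2" if "P \<subseteq> ?V" "card P = ?m - 1" for P
  proof
    assume "P \<in> F2"
    hence "Phi S x F2 (?m - 1)" by (rule spread[OF f2 fin pm[OF v2] that])
    thus False using n2 by simp
  qed
  have u1: "h = x" if "h \<in> S" "S - {h} \<in> F1" for h by (rule cosing_unique[OF f1 fin that(1) x that(2) v1])
  have u2: "h = x" if "h \<in> S" "S - {h} \<in> F2" for h by (rule cosing_unique[OF f2 fin that(1) x that(2) v2])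
  have cVm1: "card (?V - {u}) = ?m - 1" if "u \<in> ?V" for u by (rule card_Diff_singleton[OF that])
  have col: "{u} \<in> F1 \<or> insert x {u} \<in> F1" if u: "u \<in> ?V" for u
  proof -
    have uV: "{u} \<subseteq> ?V" using u by simp
    have "{u} \<in> F1 \<or> insert x {u} \<in> F1 \<or> ?V - {u} \<in> F2 \<or> insert x (?V - {u}) \<in> F2"
      using ng uV unfolding NG_def by blast
    moreover have "?V - {u} \<notin> F2" by (rule R02) (use cVm1[OF u] in auto)
    moreover have "insert x (?V - {u}) \<notin> F2"
    proof
      assume A: "insert x (?V - {u}) \<in> F2"
      have e: "insert x (?V - {u}) = S - {u}" using u x by auto
      have "S - {u} \<in> F2" using A by (simp only: e)
      hence "u = x" using u2 u by blast
      thus False using u by simp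
    qed
    ultimately show ?thesis by blast
  qed
  define W where "W = {u \<in> ?V. {u} \<notin> F1}"
  define R where "R = {u \<in> ?V. {u} \<in> F1}"
  have RW: "R \<inter> W = {}" "R \<union> W = ?V" unfolding R_def W_def by auto
  have fR: "finite R" and fW: "finite W" unfolding R_def W_def using fV by auto
  have RV: "R \<subseteq> ?V" and WV: "W \<subseteq> ?V" unfolding R_def W_def by auto
  have Wne: "W \<noteq> {}"
  proof
    assume W0: "W = {}"
    have base: "\<forall>Q. Q \<subseteq> ?V \<and> card Q = 1 \<longrightarrow> {} \<union> Q \<in> F1"
    proof (intro allI impI)
      fix Q assume Q: "Q \<subseteq> ?V \<and> card Q = 1"
      then obtain u where "Q = {u}" using card_1_singletonE by blast
      thus "{} \<union> Q \<in> F1" using Q W0 unfolding W_def by auto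
    qed
    have "\<forall>Q. Q \<subseteq> ?V \<and> card Q = ?m - 1 \<longrightarrow> {} \<union> Q \<in> F1"
      by (rule lift[OF f1 fin _ _ base]) (use m2 in auto)
    hence "Phi S x F1 (?m - 1)" unfolding Phi_def by simp
    thus False using n1 by simp
  qed
  have Rne: "R \<noteq> {}"
  proof
    assume R0: "R = {}"
    have all: "\<forall>e\<in>?V. insert e {x} \<in> F1"
    proof
      fix e assume e: "e \<in> ?V"
      hence "{e} \<notin> F1" using R0 unfolding R_def by blast
      hence "insert x {e} \<in> F1" using col[OF e] by simp
      thus "insert e {x} \<in> F1" by (simp add: insert_commute)
    qed
    have "?V \<noteq> {}" using m2 by (metis card.empty not_numeral_le_zero)
    then obtain v where v: "v \<in> ?V" by blast
    have "card (?V - {v}) \<noteq> 0" using cVm1[OF v] m2 by simp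
    hence neE: "?V - {v} \<noteq> {}" by (metis card.empty)
    have all': "\<forall>e\<in>?V - {v}. insert e {x} \<in> F1" using all by blast
    have A: "{x} \<union> (?V - {v}) \<in> F1" by (rule union_lemma[OF f1 fin _ neE _ all']) (use fV in auto)
    have e: "{x} \<union> (?V - {v}) = S - {v}" using v x by auto
    have "S - {v} \<in> F1" using A by (simp only: e)
    hence "v = x" using u1 v by blast
    thus False using v by simp
  qed
  have cWle: "card W \<le> ?m - 2"
  proof -
    have allW: "\<forall>w\<in>W. insert w {x} \<in> F1"
    proof
      fix w assume w: "w \<in> W"
      hence "insert x {w} \<in> F1" using col[of w] unfolding W_def by auto
      thus "insert w {x} \<in> F1" by (simp add: insert_commute)
    qed
    have xW: "{x} \<union> W \<in> F1" by (rule union_lemma[OF f1 fin fW Wne _ allW]) (use WV in auto)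
    obtain r where r: "r \<in> R" using Rne by blast
    have Wsub: "W \<subseteq> ?V - {r}" using r RW by blast
    have rV: "r \<in> ?V" using r RV by blast
    have fVr: "finite (?V - {r})" using fV by simp
    have le: "card W \<le> ?m - 1" using card_mono[OF fVr Wsub] cVm1[OF rV] by simp
    have "card W \<noteq> ?m - 1"
    proof
      assume "card W = ?m - 1"
      hence "W = ?V - {r}" using card_subset_eq[OF fVr Wsub] cVm1[OF rV] by simp
      hence e: "{x} \<union> W = S - {r}" using rV x by auto
      have "S - {r} \<in> F1" using xW by (simp only: e)
      hence "r = x" using u1 rV by blast
      thus False using rV by simp
    qed
    thus ?thesis using le by simp
  qed
  have cRle: "card R \<le> ?m - 2"
  proof -
    have allR: "\<forall>r\<in>R. insert r {} \<in> F1" unfolding R_def by simp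
    have RF: "{} \<union> R \<in> F1" by (rule union_lemma[OF f1 fin fR Rne _ allR]) simp
    obtain w where w: "w \<in> W" using Wne by blast
    have Rsub: "R \<subseteq> ?V - {w}" using w RW by blast
    have wV: "w \<in> ?V" using w WV by blast
    have fVw: "finite (?V - {w})" using fV by simp
    have le: "card R \<le> ?m - 1" using card_mono[OF fVw Rsub] cVm1[OF wV] by simp
    have "card R \<noteq> ?m - 1"
    proof
      assume "card R = ?m - 1"
      thus False using R01[OF RV] RF by simp
    qed
    thus ?thesis using le by simp
  qed
  have mix1: "{r,w} \<notin> F1" if r: "r \<in> R" and w: "w \<in> W" for r w
  proof
    assume A: "{r,w} \<in> F1"
    have rw: "r \<noteq> w" using r w RW by blast
    have "{r,w} - {w} = {r}" using rw by auto
    hence "{r,w} - {w} \<in> F1" using r unfolding R_def by simp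
    hence "{r,w} - {r} \<in> F1" using adj_down[OF f1 fin A, of w r] by simp
    moreover have "{r,w} - {r} = {w}" using rw by auto
    ultimately show False using w unfolding W_def by simp
  qed
  have mix2: "insert x {r,w} \<notin> F1" if r: "r \<in> R" and w: "w \<in> W" for r w
  proof
    assume A: "insert x {r,w} \<in> F1"
    have rw: "r \<noteq> w" using r w RW by blast
    have xr: "x \<noteq> r" using r RV by blast
    have xw: "x \<noteq> w" using w WV by blast
    have "insert x {w} \<in> F1" using col[of w] w unfolding W_def by auto
    moreover have "insert x {r,w} - {r} = insert x {w}" using rw xr by auto
    ultimately have "insert x {r,w} - {r} \<in> F1" by simp
    hence "insert x {r,w} - {x} \<in> F1" using adj_down[OF f1 fin A, of r x] by simp
    moreover have "insert x {r,w} - {x} = {r,w}" using xr xw by auto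
    ultimately show False using mix1[OF r w] by simp
  qed
  have tyf: "?V - {r,w} \<in> F2 \<or> insert x (?V - {r,w}) \<in> F2" if r: "r \<in> R" and w: "w \<in> W" for r w
  proof -
    have sub: "{r,w} \<subseteq> ?V" using r w RV WV by blast
    have "{r,w} \<in> F1 \<or> insert x {r,w} \<in> F1 \<or> ?V - {r,w} \<in> F2 \<or> insert x (?V - {r,w}) \<in> F2"
      using ng sub unfolding NG_def by blast
    thus ?thesis using mix1[OF r w] mix2[OF r w] by blast
  qed
  have ns0: "\<not> (?V - {a,b} \<in> F2 \<and> ?V - {a,c} \<in> F2)"
    if abc: "a \<in> ?V" "b \<in> ?V" "c \<in> ?V" "a \<noteq> b" "a \<noteq> c" "b \<noteq> c" for a b c
  proof
    assume h: "?V - {a,b} \<in> F2 \<and> ?V - {a,c} \<in> F2"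
    let ?Q = "?V - {a,b,c}"
    have "insert c ?Q = ?V - {a,b}" "insert b ?Q = ?V - {a,c}" using abc by auto
    hence i: "insert b ?Q \<in> F2" "insert c ?Q \<in> F2" using h by simp_all
    have "insert b (insert c ?Q) \<in> F2" by (rule adj_union[OF f2 fin i]) (use abc in auto)
    moreover have "insert b (insert c ?Q) = ?V - {a}" using abc by auto
    ultimately have "?V - {a} \<in> F2" by simp
    thus False using R02[of "?V - {a}"] cVm1[OF abc(1)] by blast
  qed
  have ns1: "\<not> (insert x (?V - {a,b}) \<in> F2 \<and> insert x (?V - {a,c}) \<in> F2)"
    if abc: "a \<in> ?V" "b \<in> ?V" "c \<in> ?V" "a \<noteq> b" "a \<noteq> c" "b \<noteq> c" for a b c
  proof
    assume h: "insert x (?V - {a,b}) \<in> F2 \<and> insert x (?V - {a,c}) \<in> F2"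
    let ?Q = "insert x (?V - {a,b,c})"
    have "insert c ?Q = insert x (?V - {a,b})" "insert b ?Q = insert x (?V - {a,c})" using abc by auto
    hence i: "insert b ?Q \<in> F2" "insert c ?Q \<in> F2" using h by simp_all
    have "insert b (insert c ?Q) \<in> F2" by (rule adj_union[OF f2 fin i]) (use abc in auto)
    moreover have e: "insert b (insert c ?Q) = S - {a}" using abc x by auto
    ultimately have "S - {a} \<in> F2" by (simp only: e)
    hence "a = x" using u2 abc(1) by blast
    thus False using abc(1) by simp
  qed
  have cW2: "card W \<le> 2"
  proof (rule ccontr)
    assume "\<not> card W \<le> 2"
    hence "card W \<ge> 3" by simp
    then obtain a b c where abc: "a \<in> W" "b \<in> W" "c \<in> W" "a \<noteq> b" "a \<noteq> c" "b \<noteq> c"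
      using three_elems[OF fW] by blast
    obtain r where r: "r \<in> R" using Rne by blast
    have V: "r \<in> ?V" "a \<in> ?V" "b \<in> ?V" "c \<in> ?V" using r abc RV WV by auto
    have d: "r \<noteq> a" "r \<noteq> b" "r \<noteq> c" using r abc RW by auto
    show False
      by (rule pig3[OF tyf[OF r abc(1)] tyf[OF r abc(2)] tyf[OF r abc(3)]
          ns0[OF V(1,2,3) d(1,2) abc(4)] ns0[OF V(1,2,4) d(1,3) abc(5)] ns0[OF V(1,3,4) d(2,3) abc(6)]
          ns1[OF V(1,2,3) d(1,2) abc(4)] ns1[OF V(1,2,4) d(1,3) abc(5)] ns1[OF V(1,3,4) d(2,3) abc(6)]])
  qed
  have cR2: "card R \<le> 2"
  proof (rule ccontr)
    assume "\<not> card R \<le> 2"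
    hence "card R \<ge> 3" by simp
    then obtain a b c where abc: "a \<in> R" "b \<in> R" "c \<in> R" "a \<noteq> b" "a \<noteq> c" "b \<noteq> c"
      using three_elems[OF fR] by blast
    obtain w where w: "w \<in> W" using Wne by blast
    have V: "w \<in> ?V" "a \<in> ?V" "b \<in> ?V" "c \<in> ?V" using w abc RV WV by auto
    have d: "w \<noteq> a" "w \<noteq> b" "w \<noteq> c" using w abc RW by auto
    have sw: "{p, w} = {w, p}" for p by auto
    note t1 = tyf[OF abc(1) w] and t2 = tyf[OF abc(2) w] and t3 = tyf[OF abc(3) w]
    show False
      by (rule pig3[OF t1[unfolded sw] t2[unfolded sw] t3[unfolded sw]
          ns0[OF V(1,2,3) d(1,2) abc(4)] ns0[OF V(1,2,4) d(1,3) abc(5)] ns0[OF V(1,3,4) d(2,3) abc(6)]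
          ns1[OF V(1,2,3) d(1,2) abc(4)] ns1[OF V(1,2,4) d(1,3) abc(5)] ns1[OF V(1,3,4) d(2,3) abc(6)]])
  qed
  have sum: "?m = card R + card W" using card_Un_disjoint[OF fR fW RW(1)] RW(2) by simp
  have m4: "?m = 4" using sum cW2 cR2 cWle cRle m2 by arith
  have c2: "card R = 2" "card W = 2" using sum cW2 cR2 m4 by arith+
  have "\<forall>r\<in>R. \<forall>w\<in>W. {r,w} \<notin> F1 \<and> insert x {r,w} \<notin> F1" using mix1 mix2 by blast
  thus ?thesis using m4 RW c2 by blast
qed

lemma mixed_complement:
  assumes fV: "finite V" and P: "P \<subseteq> V" "card P = 2" and V4: "card V = 4"
    and RW: "R2 \<inter> W2 = {}" "R2 \<union> W2 = V" "card R2 = 2" "card W2 = 2"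
    and nR: "P \<noteq> R2" and nW: "P \<noteq> W2"
  shows "\<exists>\<rho>\<in>R2. \<exists>\<omega>\<in>W2. V - P = {\<rho>, \<omega>}"
proof -
  have fP: "finite P" using P(1) fV by (rule finite_subset)
  have cVP: "card (V - P) = 2" using card_Diff_subset[OF fP P(1)] P(2) V4 by simp
  have fR: "finite R2" and fW: "finite W2" using RW(2) fV by (metis finite_Un)+
  have fVP: "finite (V - P)" using fV by simp
  have "(V - P) \<inter> R2 \<noteq> {}"
  proof
    assume "(V - P) \<inter> R2 = {}"
    hence "V - P \<subseteq> W2" using RW(2) by blast
    hence "V - P = W2" using card_subset_eq[OF fW] cVP RW(4) by simp
    hence "P = R2" using RW(1,2) P(1) by blast
    thus False using nR by simp
  qed
  then obtain \<rho> where r: "\<rho> \<in> V - P" "\<rho> \<in> R2" by blast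
  have "(V - P) \<inter> W2 \<noteq> {}"
  proof
    assume "(V - P) \<inter> W2 = {}"
    hence "V - P \<subseteq> R2" using RW(2) by blast
    hence "V - P = R2" using card_subset_eq[OF fR] cVP RW(3) by simp
    hence "P = W2" using RW(1,2) P(1) by blast
    thus False using nW by simp
  qed
  then obtain \<omega> where w: "\<omega> \<in> V - P" "\<omega> \<in> W2" by blast
  have ne: "\<rho> \<noteq> \<omega>" using r w RW(1) by blast
  have sub: "{\<rho>, \<omega>} \<subseteq> V - P" using r w by blast
  have "card {\<rho>, \<omega>} = 2" using ne by simp
  hence "{\<rho>, \<omega>} = V - P" using card_subset_eq[OF fVP sub] cVP by simp
  thus ?thesis using r w by blast
qed

lemma select:
  assumes fV: "finite V" and V4: "card V = 4"
    and RW: "R \<inter> W = {}" "R \<union> W = V" "card R = 2" "card W = 2"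
    and RW2: "R2 \<inter> W2 = {}" "R2 \<union> W2 = V" "card R2 = 2" "card W2 = 2"
  shows "\<exists>r\<in>R. \<exists>w\<in>W. \<exists>\<rho>\<in>R2. \<exists>\<omega>\<in>W2. V - {r, w} = {\<rho>, \<omega>}"
proof -
  obtain r1 r2 where R: "R = {r1, r2}" "r1 \<noteq> r2" using RW(3) card_2_iff by metis
  obtain w1 w2 where W: "W = {w1, w2}" "w1 \<noteq> w2" using RW(4) card_2_iff by metis
  have d: "r1 \<noteq> w1" "r1 \<noteq> w2" using RW(1) R W by auto
  have sub1: "{r1, w1} \<subseteq> V" "{r1, w2} \<subseteq> V" using RW(2) R W by auto
  have c1: "card {r1, w1} = 2" "card {r1, w2} = 2" using d by auto
  have r1R: "r1 \<in> R" and w1W: "w1 \<in> W" and w2W: "w2 \<in> W" using R W by auto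
  show ?thesis
  proof (cases "{r1, w1} \<noteq> R2 \<and> {r1, w1} \<noteq> W2")
    case True
    then obtain \<rho> \<omega> where "\<rho> \<in> R2" "\<omega> \<in> W2" "V - {r1, w1} = {\<rho>, \<omega>}"
      using mixed_complement[OF fV sub1(1) c1(1) V4 RW2] by blast
    thus ?thesis using r1R w1W by blast
  next
    case False
    have n: "{r1, w2} \<noteq> R2 \<and> {r1, w2} \<noteq> W2"
    proof (cases "{r1, w1} = R2")
      case True
      have a: "{r1, w2} \<noteq> R2" using True W(2) d by (metis doubleton_eq_iff)
      have b: "{r1, w2} \<noteq> W2" using True RW2(1) by blast
      show ?thesis using a b by simp
    next
      case F: False
      hence True: "{r1, w1} = W2" using False by simp
      have a: "{r1, w2} \<noteq> W2" using True W(2) d by (metis doubleton_eq_iff)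
      have b: "{r1, w2} \<noteq> R2" using True RW2(1) by blast
      show ?thesis using a b by simp
    qed
    then obtain \<rho> \<omega> where "\<rho> \<in> R2" "\<omega> \<in> W2" "V - {r1, w2} = {\<rho>, \<omega>}"
      using mixed_complement[OF fV sub1(2) c1(2) V4 RW2] by blast
    thus ?thesis using r1R w2W by blast
  qed
qed

lemma caseA:
  assumes f1: "fam S F1" and f2: "fam S F2" and fin: "finite S" and c3: "card S \<ge> 3" and x: "x \<in> S"
    and v2: "S - {x} \<in> F2" and ng: "NG S F1 F2 x" and s: "s4 S F1 F2"
    and pm: "Phi S x F1 (card (S - {x}) - 1)"
  shows False
proof -
  let ?V = "S - {x}"
  let ?m = "card ?V"
  have fV: "finite ?V" using fin by simp
  have mn: "?m = card S - 1" by (rule card_Diff_singleton[OF x])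
  have "\<exists>k. 1 \<le> k \<and> Phi S x F1 k" using pm mn c3 by (intro exI[of _ "?m - 1"]) simp
  then obtain a where a: "1 \<le> a" "Phi S x F1 a" and amin: "\<forall>b<a. \<not> (1 \<le> b \<and> Phi S x F1 b)"
    using exists_least_iff[of "\<lambda>k. 1 \<le> k \<and> Phi S x F1 k"] by blast
  have ale: "a \<le> ?m - 1"
  proof (rule ccontr)
    assume "\<not> a \<le> ?m - 1"
    hence "?m - 1 < a" by simp
    thus False using amin pm mn c3 by auto
  qed
  have a2: "a \<noteq> 1"
  proof
    assume "a = 1"
    hence p1: "Phi S x F1 1" using a by simp
    have "1 \<le> (1::nat) \<and> 1 \<le> card S - 1 \<and> x \<in> S" using c3 x by simp
    hence np: "\<not> Phi S x F2 (card S - 1)" using s p1 unfolding s4_def by blast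
    have "Phi S x F2 (card S - 1)" unfolding Phi_def
    proof (intro allI impI)
      fix C assume C: "C \<subseteq> ?V \<and> card C = card S - 1"
      hence "C = ?V" using card_subset_eq[OF fV] mn by auto
      thus "C \<in> F2" using v2 by simp
    qed
    thus False using np by simp
  qed
  have npa: "\<not> Phi S x F1 (a - 1)" using amin a(1) a2 by auto
  show False
    by (rule halfcase[OF f1 f2 fin x ng s _ _ a(2) npa]) (use a(1) a2 ale mn c3 in auto)
qed

lemma x1x2_false:
  assumes f1: "fam S F1" and f2: "fam S F2" and fin: "finite S" and c3: "card S \<ge> 3" and x: "x \<in> S"
    and v1: "S - {x} \<in> F1" and v2: "S - {x} \<in> F2" and ng: "NG S F1 F2 x" and s: "s4 S F1 F2"
  shows False
proof -
  let ?V = "S - {x}"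
  have fV: "finite ?V" using fin by simp
  have mn: "card ?V = card S - 1" by (rule card_Diff_singleton[OF x])
  have ng2: "NG S F2 F1 x" by (rule NG_sym[OF ng])
  have s2: "s4 S F2 F1" by (rule s4_sym[OF s])
  show False
  proof (cases "Phi S x F1 (card ?V - 1)")
    case True
    show False by (rule caseA[OF f1 f2 fin c3 x v2 ng s True])
  next
    case n1: False
    show False
    proof (cases "Phi S x F2 (card ?V - 1)")
      case True
      show False by (rule caseA[OF f2 f1 fin c3 x v1 ng2 s2 True])
    next
      case n2: False
      have m2: "2 \<le> card ?V" using mn c3 by simp
      obtain R W where V4: "card ?V = 4" and RW: "R \<inter> W = {}" "R \<union> W = ?V" "card R = 2" "card W = 2"
        and m1: "\<forall>r\<in>R. \<forall>w\<in>W. {r,w} \<notin> F1 \<and> insert x {r,w} \<notin> F1"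
        using remaining[OF f1 f2 fin x v1 v2 ng n1 n2 m2] by blast
      obtain R2 W2 where RW2: "R2 \<inter> W2 = {}" "R2 \<union> W2 = ?V" "card R2 = 2" "card W2 = 2"
        and m2': "\<forall>r\<in>R2. \<forall>w\<in>W2. {r,w} \<notin> F2 \<and> insert x {r,w} \<notin> F2"
        using remaining[OF f2 f1 fin x v2 v1 ng2 n2 n1 m2] by blast
      obtain r w \<rho> \<omega> where sel: "r \<in> R" "w \<in> W" "\<rho> \<in> R2" "\<omega> \<in> W2" "?V - {r,w} = {\<rho>,\<omega>}"
        using select[OF fV V4 RW RW2] by blast
      have sub: "{r,w} \<subseteq> ?V" using sel RW by blast
      have "{r,w} \<in> F1 \<or> insert x {r,w} \<in> F1 \<or> ?V - {r,w} \<in> F2 \<or> insert x (?V - {r,w}) \<in> F2"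
        using ng sub unfolding NG_def by blast
      thus False using m1 m2' sel by auto
    qed
  qed
qed

lemma cosing_of_card:
  assumes fin: "finite S" and A: "A \<subseteq> S" "card A = card S - 1" and c: "card S \<ge> 1"
  shows "\<exists>a\<in>S. A = S - {a}"
proof -
  have fA: "finite A" using A(1) fin by (rule finite_subset)
  have "card (S - A) = 1" using card_Diff_subset[OF fA A(1)] A(2) c by simp
  then obtain a where a: "S - A = {a}" using card_1_singletonE by blast
  hence "a \<in> S" "A = S - {a}" using A(1) by auto
  thus ?thesis by blast
qed

lemma backward:
  assumes fin: "finite S" and c3: "card S \<ge> 3" and sub1: "S1 \<subseteq> Pow S" and sub2: "S2 \<subseteq> Pow S"
    and ex: "\<exists>A1 A2 B1 B2. A1 \<in> S1 \<and> A2 \<in> S2 \<and>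
       card A1 = card S - 1 \<and> card A2 = card S - 1 \<and> A1 \<noteq> A2 \<and>
       B1 \<subseteq> S \<and> B2 \<subseteq> S \<and> card B1 = card S - 2 \<and> card B2 = card S - 2 \<and>
       B1 \<inter> A1 = B1 \<inter> B2 \<and> B2 \<inter> A2 = B1 \<inter> B2 \<and>
       B1 \<inter> B2 \<subseteq> A1 \<inter> A2 \<and> card (B1 \<inter> B2) = card S - 3 \<and>
       (\<forall>b \<in> B1. {b} \<in> S1) \<and> (\<forall>b \<in> B2. {b} \<in> S2)"
  shows "order_consistent S S1 S2"
proof -
  obtain A1 A2 B1 B2 where A: "A1 \<in> S1" "A2 \<in> S2" "card A1 = card S - 1" "card A2 = card S - 1" "A1 \<noteq> A2"
    and B: "B1 \<subseteq> S" "B2 \<subseteq> S" "card B1 = card S - 2" "card B2 = card S - 2"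
    and I: "B1 \<inter> A1 = B1 \<inter> B2" "B2 \<inter> A2 = B1 \<inter> B2" "B1 \<inter> B2 \<subseteq> A1 \<inter> A2" "card (B1 \<inter> B2) = card S - 3"
    and sg: "\<forall>b \<in> B1. {b} \<in> S1" "\<forall>b \<in> B2. {b} \<in> S2"
    using ex by (elim exE conjE) (rule that; assumption)
  have A1S: "A1 \<subseteq> S" using A(1) sub1 by blast
  have A2S: "A2 \<subseteq> S" using A(2) sub2 by blast
  obtain x1 where x1: "x1 \<in> S" "A1 = S - {x1}" using cosing_of_card[OF fin A1S A(3)] c3 by auto
  obtain x2 where x2: "x2 \<in> S" "A2 = S - {x2}" using cosing_of_card[OF fin A2S A(4)] c3 by auto
  have ne: "x1 \<noteq> x2" using A(5) x1 x2 by blast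
  have fB1: "finite B1" using B(1) fin by (rule finite_subset)
  have fB2: "finite B2" using B(2) fin by (rule finite_subset)
  have x1B1: "x1 \<in> B1"
  proof (rule ccontr)
    assume "x1 \<notin> B1"
    hence "B1 \<inter> A1 = B1" using B(1) x1 by blast
    hence "card B1 = card (B1 \<inter> B2)" using I(1) by simp
    thus False using B(3) I(4) c3 by simp
  qed
  have x2B2: "x2 \<in> B2"
  proof (rule ccontr)
    assume "x2 \<notin> B2"
    hence "B2 \<inter> A2 = B2" using B(2) x2 by blast
    hence "card B2 = card (B1 \<inter> B2)" using I(2) by simp
    thus False using B(4) I(4) c3 by simp
  qed
  show ?thesis unfolding order_consistent_def
  proof (intro allI impI)
    fix xs assume xs: "distinct xs \<and> set xs = S"
    hence dxs: "distinct xs" and sxs: "set xs = S" by auto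
    have L: "length xs = card S" using distinct_card[OF dxs] sxs by simp
    hence xsne: "xs \<noteq> []" using c3 by auto
    let ?s = "hd xs" and ?t = "last xs"
    have sS: "?s \<in> S" using hd_in_set[OF xsne] sxs by simp
    have tS: "?t \<in> S" using last_in_set[OF xsne] sxs by simp
    have xs1: "?s # tl xs = xs" by (rule hd_Cons_tl[OF xsne])
    have take1: "set (take 1 xs) = {?s}" using xsne by (cases xs) auto
    have drop1: "set (drop 1 xs) = S - {?s}"
    proof -
      have "distinct (?s # tl xs)" using dxs by (simp only: xs1)
      hence "?s \<notin> set (tl xs)" by simp
      moreover have "set (?s # tl xs) = set xs" by (simp only: xs1)
      hence "set xs = insert ?s (set (tl xs))" by simp
      moreover have "drop 1 xs = tl xs" by (simp add: drop_Suc)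
      ultimately show ?thesis using sxs by auto
    qed
    have xs2: "butlast xs @ [?t] = xs" by (rule append_butlast_last_id[OF xsne])
    have lb: "length (butlast xs) = card S - 1" using L by simp
    have taken1: "set (take (card S - 1) xs) = S - {?t}"
    proof -
      have "take (card S - 1) xs = butlast xs" using L by (simp add: butlast_conv_take)
      moreover have "distinct (butlast xs @ [?t])" using dxs by (simp only: xs2)
      hence "?t \<notin> set (butlast xs)" by simp
      moreover have "set (butlast xs @ [?t]) = set xs" by (simp only: xs2)
      hence "set xs = insert ?t (set (butlast xs))" by simp
      ultimately show ?thesis using sxs by auto
    qed
    have dropn1: "set (drop (card S - 1) xs) = {?t}"
    proof -
      have "drop (length (butlast xs)) (butlast xs @ [?t]) = [?t]" by simp
      hence "drop (card S - 1) (butlast xs @ [?t]) = [?t]" by (simp only: lb)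
      hence "drop (card S - 1) xs = [?t]" by (simp only: xs2)
      thus ?thesis by simp
    qed
    have st: "?s \<noteq> ?t"
    proof
      assume "?s = ?t"
      have "length xs \<ge> 2" using L c3 by simp
      hence "xs ! 0 \<noteq> xs ! (length xs - 1)" using nth_eq_iff_index_eq[OF dxs, of 0 "length xs - 1"] xsne by simp
      moreover have "xs ! 0 = ?s" using xsne by (simp add: hd_conv_nth)
      moreover have "xs ! (length xs - 1) = ?t" using xsne by (simp add: last_conv_nth)
      ultimately show False using \<open>?s = ?t\<close> by simp
    qed
    show "\<exists>i\<in>{1..length xs}. set (take i xs) \<in> S1 \<or> set (drop (i - 1) xs) \<in> S2"
    proof (cases "?t = x1")
      case True
      have "card S - 1 \<in> {1..length xs}" using L c3 by simp
      moreover have "set (take (card S - 1) xs) \<in> S1" using taken1 True x1(2) A(1) by simp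
      ultimately show ?thesis by blast
    next
      case t1: False
      show ?thesis
      proof (cases "?s = x2")
        case True
        have "2 \<in> {1..length xs}" using L c3 by simp
        moreover have "set (drop (2 - 1) xs) \<in> S2" using drop1 True x2(2) A(2) by simp
        ultimately show ?thesis by blast
      next
        case s2: False
        show ?thesis
        proof (cases "?s \<in> B1")
          case True
          have "1 \<in> {1..length xs}" using L c3 by simp
          moreover have "set (take 1 xs) \<in> S1" using take1 True sg(1) by simp
          ultimately show ?thesis by blast
        next
          case s3: False
          show ?thesis
          proof (cases "?t \<in> B2")
            case True
            have "length xs \<in> {1..length xs}" using L c3 by simp
            moreover have "set (drop (length xs - 1) xs) \<in> S2" using dropn1 L True sg(2) by simp
            ultimately show ?thesis by blast
          next
            case t3: False
            have sx1: "?s \<noteq> x1" using s3 x1B1 by blast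
            have tx2: "?t \<noteq> x2" using t3 x2B2 by blast
            let ?I = "B1 \<inter> B2"
            let ?E = "{x1, x2, ?s, ?t}"
            have fI: "finite ?I" using fB1 by simp
            have disj: "?I \<inter> ?E = {}" using I(3) x1 x2 s3 t3 by blast
            have cE: "card ?E = 4" using ne sx1 s2 t1 tx2 st by auto
            have sub: "?I \<union> ?E \<subseteq> S" using B x1 x2 sS tS by blast
            have "card (?I \<union> ?E) = card ?I + 4" using card_Un_disjoint[OF fI _ disj] cE by simp
            moreover have "card (?I \<union> ?E) \<le> card S" using card_mono[OF fin sub] .
            ultimately have False using I(4) c3 by simp
            thus ?thesis ..
          qed
        qed
      qed
    qed
  qed
qed

lemma S_pair_s4: "S_pair S S1 S2 \<Longrightarrow> s4 S S1 S2"
  unfolding S_pair_def s4_def Phi_def by (elim conjE)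

theorem theorem2:
  fixes S :: "'a set" and S1 S2 :: "'a set set"
  assumes "finite S" and "card S \<ge> 3" and "S_pair S S1 S2"
  shows "order_consistent S S1 S2 \<longleftrightarrow>
    (\<exists>A1 A2 B1 B2. A1 \<in> S1 \<and> A2 \<in> S2 \<and>
       card A1 = card S - 1 \<and> card A2 = card S - 1 \<and> A1 \<noteq> A2 \<and>
       B1 \<subseteq> S \<and> B2 \<subseteq> S \<and> card B1 = card S - 2 \<and> card B2 = card S - 2 \<and>
       B1 \<inter> A1 = B1 \<inter> B2 \<and> B2 \<inter> A2 = B1 \<inter> B2 \<and>
       B1 \<inter> B2 \<subseteq> A1 \<inter> A2 \<and> card (B1 \<inter> B2) = card S - 3 \<and>
       (\<forall>b \<in> B1. {b} \<in> S1) \<and> (\<forall>b \<in> B2. {b} \<in> S2))"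
proof
  have f1: "fam S S1" by (rule S_pair_fam1[OF assms(3)])
  have f2: "fam S S2" by (rule S_pair_fam2[OF assms(3)])
  have s: "s4 S S1 S2" by (rule S_pair_s4[OF assms(3)])
  have fin: "finite S" and c3: "card S \<ge> 3" using assms by auto
  {
    assume oc: "order_consistent S S1 S2"
    have mf: "MF S S1 S2" by (rule master[OF f1 f2 fin oc])
    have c2: "card S \<ge> 2" using c3 by simp
    obtain x1 where x1: "x1 \<in> S" "S - {x1} \<in> S1" using exists_cosing[OF f1 f2 fin c2 mf] by blast
    obtain x2 where x2: "x2 \<in> S" "S - {x2} \<in> S2" using exists_cosing[OF f2 f1 fin c2 MF_sym[OF mf]] by blast
    show "\<exists>A1 A2 B1 B2. A1 \<in> S1 \<and> A2 \<in> S2 \<and>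
       card A1 = card S - 1 \<and> card A2 = card S - 1 \<and> A1 \<noteq> A2 \<and>
       B1 \<subseteq> S \<and> B2 \<subseteq> S \<and> card B1 = card S - 2 \<and> card B2 = card S - 2 \<and>
       B1 \<inter> A1 = B1 \<inter> B2 \<and> B2 \<inter> A2 = B1 \<inter> B2 \<and>
       B1 \<inter> B2 \<subseteq> A1 \<inter> A2 \<and> card (B1 \<inter> B2) = card S - 3 \<and>
       (\<forall>b \<in> B1. {b} \<in> S1) \<and> (\<forall>b \<in> B2. {b} \<in> S2)"
    proof (cases "x1 = x2")
      case True
      have v2: "S - {x1} \<in> S2" using x2 True by simp
      have ng: "NG S S1 S2 x1" by (rule NG_from_OC[OF f1 f2 fin oc x1(1) x1(2) v2])
      have False by (rule x1x2_false[OF f1 f2 fin c3 x1(1) x1(2) v2 ng s])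
      thus ?thesis ..
    next
      case False
      show ?thesis by (rule distinct_case[OF f1 f2 fin c3 mf x1(1) x2(1) False x1(2) x2(2)])
    qed
  }
  {
    assume ex: "\<exists>A1 A2 B1 B2. A1 \<in> S1 \<and> A2 \<in> S2 \<and>
       card A1 = card S - 1 \<and> card A2 = card S - 1 \<and> A1 \<noteq> A2 \<and>
       B1 \<subseteq> S \<and> B2 \<subseteq> S \<and> card B1 = card S - 2 \<and> card B2 = card S - 2 \<and>
       B1 \<inter> A1 = B1 \<inter> B2 \<and> B2 \<inter> A2 = B1 \<inter> B2 \<and>
       B1 \<inter> B2 \<subseteq> A1 \<inter> A2 \<and> card (B1 \<inter> B2) = card S - 3 \<and>
       (\<forall>b \<in> B1. {b} \<in> S1) \<and> (\<forall>b \<in> B2. {b} \<in> S2)"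
    have sub1: "S1 \<subseteq> Pow S" using f1 unfolding fam_def by blast
    have sub2: "S2 \<subseteq> Pow S" using f2 unfolding fam_def by blast
    show "order_consistent S S1 S2" by (rule backward[OF fin c3 sub1 sub2 ex])
  }
qed

end
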